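(* Assume (A1), (F), (I), let $(u,v,n)$ be the global classical solution of (P), and suppose there are constants $0<A\le B$ such that $AS\le v\le BS$ in $[0,\infty)\times\bar\Omega$. Set $\tilde S:=BS$ and $\gamma_0(s):=\min\{1,1/\gamma^*\}\gamma(s)$ for $s>0$. Then there is $C>0$ independent of $t$ such that $$\partial_t\tilde S+B\gamma_0(\tilde S)(u+n)\le\frac{\beta B}{A}\Gamma(\tilde S)+C\quad\text{in }(0,\infty)\times\Omega.$$
   Context: $\Omega\subset\mathbb{R}^N$ bounded domain with smooth boundary, $\tau,\beta>0$. Problem (P): $\partial_t u=\Delta(u\gamma(v))+uf(n)$, $\tau\partial_t v=\Delta v-\beta v+u$, $\partial_t n=\Delta n-uf(n)$ in $(0,\infty)\times\Omega$, $\nabla(u\gamma(v))\cdot\nu=\nabla v\cdot\nu=\nabla n\cdot\nu=0$ on $\partial\Omega$, $(u,v,n)(0)=(u^{in},v^{in},n^{in})$; under (A1),(F),(I) it has a unique global non-negative classical solution, and $v\ge v_*$ on $[0,\infty)\times\bar\Omega$ for a constant $v_*>0$ depending only on $\Omega,\tau,\beta,v^{in},\|u^{in}\|_1$. (A1): $\gamma\in C^3((0,\infty))$, $\gamma>0$, $\gamma'\le0$, $\lim_{s\to\infty}\gamma(s)=0$. (F): $f\in C^1([0,\infty))$, $f(0)=0$, $f\ge0$. (I): $(u^{in},v^{in},n^{in})\in W^{1,N+1}(\Omega;\mathbb{R}^3)$, $u^{in}\not\equiv0$, $u^{in},n^{in}\ge0$, $v^{in}>0$ in $\bar\Omega$.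 $\mathcal{A}z=-\Delta z+\beta z$ with homogeneous Neumann boundary conditions; $S(t):=\mathcal{A}^{-1}[u(t)+n(t)]$; $\Gamma(s):=\int_1^s\gamma(\eta)\,d\eta$; $\gamma^*:=\sup_{s\ge v_*}\gamma(s)$. *)

theory Defs
  imports "HOL-Analysis.Analysis"
begin

definition pd :: "'a::euclidean_space \<Rightarrow> ('a \<Rightarrow> real) \<Rightarrow> 'a \<Rightarrow> real" where
  "pd i w x = frechet_derivative w (at x) i"

fun pds :: "'a::euclidean_space list \<Rightarrow> ('a \<Rightarrow> real) \<Rightarrow> 'a \<Rightarrow> real" where
  "pds [] w = w"
| "pds (i # is) w = pd i (pds is w)"

definition Ck_on :: "nat \<Rightarrow> 'a::euclidean_space set \<Rightarrow> ('a \<Rightarrow> real) \<Rightarrow> bool" where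
  "Ck_on k U w \<longleftrightarrow>
     (\<forall>is. set is \<subseteq> Basis \<and> length is \<le> k \<longrightarrow>
        continuous_on U (pds is w) \<and>
        (length is < k \<longrightarrow> (\<forall>x\<in>U. pds is w differentiable (at x))))"

definition smooth_on :: "'a::euclidean_space set \<Rightarrow> ('a \<Rightarrow> real) \<Rightarrow> bool" where
  "smooth_on U w \<longleftrightarrow> (\<forall>k. Ck_on k U w)"

definition grad :: "('a::euclidean_space \<Rightarrow> real) \<Rightarrow> 'a \<Rightarrow> 'a" where
  "grad w x = (\<Sum>i\<in>Basis. pd i w x *\<^sub>R i)"

definition lap :: "('a::euclidean_space \<Rightarrow> real) \<Rightarrow> 'a \<Rightarrow> real" where
  "lap w x = (\<Sum>i\<in>Basis. pd i (pd i w) x)"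

text \<open>w is C^1 up to the boundary of the set K (one-sided derivatives at boundary points).\<close>
definition C1_upto :: "'a::euclidean_space set \<Rightarrow> ('a \<Rightarrow> real) \<Rightarrow> bool" where
  "C1_upto K w \<longleftrightarrow>
     (\<forall>x\<in>K. w differentiable (at x within K)) \<and>
     (\<forall>i\<in>Basis. continuous_on K (\<lambda>x. frechet_derivative w (at x within K) i))"

definition local_defining_fun :: "'a::euclidean_space set \<Rightarrow> 'a \<Rightarrow> real \<Rightarrow> ('a \<Rightarrow> real) \<Rightarrow> bool" where
  "local_defining_fun \<Omega> x r \<phi> \<longleftrightarrow>
     0 < r \<and> smooth_on (ball x r) \<phi> \<and> (\<forall>y\<in>ball x r. grad \<phi> y \<noteq> 0) \<and>
     \<Omega> \<inter> ball x r = {y\<in>ball x r. \<phi> y < 0}"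

definition smooth_bounded_domain :: "'a::euclidean_space set \<Rightarrow> bool" where
  "smooth_bounded_domain \<Omega> \<longleftrightarrow>
     open \<Omega> \<and> connected \<Omega> \<and> bounded \<Omega> \<and> \<Omega> \<noteq> {} \<and>
     (\<forall>x\<in>frontier \<Omega>. \<exists>r \<phi>. local_defining_fun \<Omega> x r \<phi>)"

text \<open>Homogeneous Neumann condition: the derivative (up to the boundary) of w in
  the direction of the outward normal (a positive multiple of grad phi) vanishes.\<close>
definition neumann_bc :: "'a::euclidean_space set \<Rightarrow> ('a \<Rightarrow> real) \<Rightarrow> bool" where
  "neumann_bc \<Omega> w \<longleftrightarrow>
     (\<forall>x\<in>frontier \<Omega>. \<forall>r \<phi>. local_defining_fun \<Omega> x r \<phi> \<longrightarrow>
        frechet_derivative w (at x within closure \<Omega>) (grad \<phi> x) = 0)"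

definition C2_C1bar :: "'a::euclidean_space set \<Rightarrow> ('a \<Rightarrow> real) \<Rightarrow> bool" where
  "C2_C1bar \<Omega> w \<longleftrightarrow> Ck_on 2 \<Omega> w \<and> C1_upto (closure \<Omega>) w"

text \<open>w = A^{-1} g, i.e. w is the classical solution of -Delta w + beta w = g in Omega
  with homogeneous Neumann boundary condition.\<close>
definition neumann_resolvent :: "'a::euclidean_space set \<Rightarrow> real \<Rightarrow> ('a \<Rightarrow> real) \<Rightarrow> ('a \<Rightarrow> real) \<Rightarrow> bool" where
  "neumann_resolvent \<Omega> \<beta> g w \<longleftrightarrow>
     C2_C1bar \<Omega> w \<and> (\<forall>x\<in>\<Omega>. - lap w x + \<beta> * w x = g x) \<and> neumann_bc \<Omega> w"

definition dt :: "(real \<Rightarrow> 'a \<Rightarrow> real) \<Rightarrow> real \<Rightarrow> 'a \<Rightarrow> real" where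
  "dt w t x = deriv (\<lambda>s. w s x) t"

definition classical_reg :: "'a::euclidean_space set \<Rightarrow> (real \<Rightarrow> 'a \<Rightarrow> real) \<Rightarrow> bool" where
  "classical_reg \<Omega> w \<longleftrightarrow>
     continuous_on ({0..} \<times> closure \<Omega>) (\<lambda>(t, x). w t x) \<and>
     (\<forall>t>0. \<forall>x\<in>closure \<Omega>. (\<lambda>s. w s x) differentiable (at t)) \<and>
     continuous_on ({0<..} \<times> closure \<Omega>) (\<lambda>(t, x). dt w t x) \<and>
     (\<forall>t>0. C2_C1bar \<Omega> (w t))"

definition classical_solution_P ::
  "'a::euclidean_space set \<Rightarrow> real \<Rightarrow> real \<Rightarrow> (real \<Rightarrow> real) \<Rightarrow> (real \<Rightarrow> real) \<Rightarrow>
   (real \<Rightarrow> 'a \<Rightarrow> real) \<Rightarrow> (real \<Rightarrow> 'a \<Rightarrow> real) \<Rightarrow> (real \<Rightarrow> 'a \<Rightarrow> real) \<Rightarrow> bool" where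
  "classical_solution_P \<Omega> \<tau> \<beta> \<gamma> f u v n \<longleftrightarrow>
     classical_reg \<Omega> u \<and> classical_reg \<Omega> v \<and> classical_reg \<Omega> n \<and>
     (\<forall>t>0. C2_C1bar \<Omega> (\<lambda>x. u t x * \<gamma> (v t x))) \<and>
     (\<forall>t>0. \<forall>x\<in>\<Omega>.
        dt u t x = lap (\<lambda>y. u t y * \<gamma> (v t y)) x + u t x * f (n t x) \<and>
        \<tau> * dt v t x = lap (v t) x - \<beta> * v t x + u t x \<and>
        dt n t x = lap (n t) x - u t x * f (n t x)) \<and>
     (\<forall>t>0. neumann_bc \<Omega> (\<lambda>x. u t x * \<gamma> (v t x)) \<and> neumann_bc \<Omega> (v t) \<and>
            neumann_bc \<Omega> (n t))"

definition assumption_A1 :: "(real \<Rightarrow> real) \<Rightarrow> bool" where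
  "assumption_A1 \<gamma> \<longleftrightarrow>
     Ck_on 3 {0<..} \<gamma> \<and> (\<forall>s>0. \<gamma> s > 0) \<and>
     (\<forall>s>0. deriv \<gamma> s \<le> 0) \<and> (\<gamma> \<longlongrightarrow> 0) at_top"

definition assumption_F :: "(real \<Rightarrow> real) \<Rightarrow> bool" where
  "assumption_F f \<longleftrightarrow> C1_upto {0..} f \<and> f 0 = 0 \<and> (\<forall>s\<ge>0. f s \<ge> 0)"

definition Gamma_fun :: "(real \<Rightarrow> real) \<Rightarrow> real \<Rightarrow> real" where
  "Gamma_fun \<gamma> s = (LBINT \<eta>=1..s. \<gamma> \<eta>)"

definition gamma_star :: "(real \<Rightarrow> real) \<Rightarrow> real \<Rightarrow> real" where
  "gamma_star \<gamma> vstar = (SUP s\<in>{vstar..}. \<gamma> s)"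

end

theory Submission
  imports Defs
begin


lemma fd_grad:
  fixes w :: "'a::euclidean_space \<Rightarrow> real"
  assumes "w differentiable (at x)"
  shows "frechet_derivative w (at x) h = grad w x \<bullet> h"
proof -
  have lin: "linear (frechet_derivative w (at x))"
    using assms frechet_derivative_works has_derivative_linear by blast
  have "frechet_derivative w (at x) h = frechet_derivative w (at x) (\<Sum>i\<in>Basis. (h \<bullet> i) *\<^sub>R i)"
    by (simp add: euclidean_representation)
  also have "\<dots> = (\<Sum>i\<in>Basis. (h \<bullet> i) * frechet_derivative w (at x) i)"
    using lin by (simp add: linear_sum linear_scale)
  also have "\<dots> = grad w x \<bullet> h"
    unfolding grad_def pd_def inner_sum_left by (simp add: inner_commute mult.commute)
  finally show ?thesis .
qed

lemma hd_grad:
  fixes w :: "'a::euclidean_space \<Rightarrow> real"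
  assumes "w differentiable (at x)"
  shows "(w has_derivative (\<lambda>h. grad w x \<bullet> h)) (at x)"
proof -
  have "frechet_derivative w (at x) = (\<lambda>h. grad w x \<bullet> h)"
    using fd_grad[OF assms] by auto
  then show ?thesis using assms frechet_derivative_works by metis
qed

lemma grad_unique:
  fixes w :: "'a::euclidean_space \<Rightarrow> real"
  assumes "(w has_derivative (\<lambda>h. g \<bullet> h)) (at x)"
  shows "grad w x = g"
proof -
  have "w differentiable (at x)" using assms differentiable_def by blast
  from hd_grad[OF this] have "(\<lambda>h. grad w x \<bullet> h) = (\<lambda>h. g \<bullet> h)"
    using assms has_derivative_unique by blast
  then have "\<And>h. (grad w x - g) \<bullet> h = 0" by (metis inner_diff_left right_minus_eq)
  then show ?thesis by (metis inner_eq_zero_iff right_minus_eq)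
qed

lemma pd_from_hd:
  fixes w :: "'a::euclidean_space \<Rightarrow> real"
  assumes "(w has_derivative D) (at x)"
  shows "pd i w x = D i"
  using assms frechet_derivative_at pd_def by metis

lemma fd_cong_open:
  assumes "open U" "x \<in> U" "\<And>y. y \<in> U \<Longrightarrow> f y = g y"
  shows "frechet_derivative f (at x) = frechet_derivative g (at x)"
proof -
  have "\<And>D. (f has_derivative D) (at x) \<longleftrightarrow> (g has_derivative D) (at x)"
    using has_derivative_transform_within_open[OF _ assms(1,2)] assms(3) by metis
  then show ?thesis unfolding frechet_derivative_def by simp
qed

lemma pd_cong_open:
  assumes "open U" "x \<in> U" "\<And>y. y \<in> U \<Longrightarrow> f y = g y"
  shows "pd i f x = pd i g x"
  using fd_cong_open[OF assms] by (simp add: pd_def)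

lemma differentiable_cong_open:
  assumes "open U" "x \<in> U" "\<And>y. y \<in> U \<Longrightarrow> f y = g y" "f differentiable (at x)"
  shows "g differentiable (at x)"
  using assms has_derivative_transform_within_open unfolding differentiable_def by metis

lemma pd_add:
  fixes f g :: "'a::euclidean_space \<Rightarrow> real"
  assumes "f differentiable (at x)" "g differentiable (at x)"
  shows "pd i (\<lambda>y. f y + g y) x = pd i f x + pd i g x"
proof -
  have "((\<lambda>y. f y + g y) has_derivative (\<lambda>h. grad f x \<bullet> h + grad g x \<bullet> h)) (at x)"
    using has_derivative_add[OF hd_grad[OF assms(1)] hd_grad[OF assms(2)]] .
  from pd_from_hd[OF this] show ?thesis
    using pd_from_hd[OF hd_grad[OF assms(1)]] pd_from_hd[OF hd_grad[OF assms(2)]] by simp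
qed

lemma pd_scale:
  fixes f :: "'a::euclidean_space \<Rightarrow> real"
  assumes "f differentiable (at x)"
  shows "pd i (\<lambda>y. c * f y) x = c * pd i f x"
proof -
  have "((\<lambda>y. c * f y) has_derivative (\<lambda>h. c * (grad f x \<bullet> h))) (at x)"
    using has_derivative_mult_right[OF hd_grad[OF assms(1)]] .
  from pd_from_hd[OF this] show ?thesis
    using pd_from_hd[OF hd_grad[OF assms(1)]] by simp
qed

lemma pd_const: "pd i (\<lambda>y. c::real) x = 0"
proof -
  have "((\<lambda>y. c) has_derivative (\<lambda>h. 0)) (at x)" by (rule has_derivative_const)
  from pd_from_hd[OF this] show ?thesis .
qed

lemma pd_const_fun: "pd i (\<lambda>y. c::real) = (\<lambda>y. 0)"
  using pd_const by blast

definition C2i :: "'a::euclidean_space set \<Rightarrow> ('a \<Rightarrow> real) \<Rightarrow> bool" where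
  "C2i U w \<longleftrightarrow> (\<forall>x\<in>U. w differentiable (at x)) \<and> (\<forall>i\<in>Basis. \<forall>x\<in>U. pd i w differentiable (at x))"

lemma C2i_mono: "C2i U w \<Longrightarrow> V \<subseteq> U \<Longrightarrow> C2i V w"
  unfolding C2i_def by blast

lemma C2i_add:
  assumes "open U" "C2i U f" "C2i U g"
  shows "C2i U (\<lambda>y. f y + g y)" "\<And>x. x \<in> U \<Longrightarrow> lap (\<lambda>y. f y + g y) x = lap f x + lap g x"
proof -
  have fd: "\<And>x. x \<in> U \<Longrightarrow> f differentiable (at x)" and fdd: "\<And>i x. i \<in> Basis \<Longrightarrow> x \<in> U \<Longrightarrow> pd i f differentiable (at x)"
    using assms(2) unfolding C2i_def by auto
  have gd: "\<And>x. x \<in> U \<Longrightarrow> g differentiable (at x)" and gdd: "\<And>i x. i \<in> Basis \<Longrightarrow> x \<in> U \<Longrightarrow> pd i g differentiable (at x)"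
    using assms(3) unfolding C2i_def by auto
  have eq: "\<And>i y. y \<in> U \<Longrightarrow> pd i (\<lambda>y. f y + g y) y = pd i f y + pd i g y"
    by (rule pd_add[OF fd gd])
  have d: "(\<lambda>y. f y + g y) differentiable (at x)" if "x \<in> U" for x
    using fd[OF that] gd[OF that] by (rule differentiable_add)
  have dd: "pd i (\<lambda>y. f y + g y) differentiable (at x)" if "x \<in> U" "i \<in> Basis" for x i
  proof -
    have "(\<lambda>y. pd i f y + pd i g y) differentiable (at x)"
      using fdd[OF that(2,1)] gdd[OF that(2,1)] by (rule differentiable_add)
    note h = this
    have e: "\<And>y. y \<in> U \<Longrightarrow> pd i f y + pd i g y = pd i (\<lambda>y. f y + g y) y" using eq by simp
    show ?thesis by (rule differentiable_cong_open[OF assms(1) that(1) e h])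
  qed
  show "C2i U (\<lambda>y. f y + g y)" using d dd unfolding C2i_def by blast
  fix x assume x: "x \<in> U"
  have "pd i (pd i (\<lambda>y. f y + g y)) x = pd i (pd i f) x + pd i (pd i g) x" if i: "i \<in> Basis" for i
  proof -
    have "pd i (pd i (\<lambda>y. f y + g y)) x = pd i (\<lambda>y. pd i f y + pd i g y) x"
      by (rule pd_cong_open[OF assms(1) x eq])
    also have "\<dots> = pd i (pd i f) x + pd i (pd i g) x"
      by (rule pd_add[OF fdd[OF i x] gdd[OF i x]])
    finally show ?thesis .
  qed
  then show "lap (\<lambda>y. f y + g y) x = lap f x + lap g x"
    unfolding lap_def by (simp add: sum.distrib)
qed

lemma C2i_scale:
  assumes "open U" "C2i U f"
  shows "C2i U (\<lambda>y. c * f y)" "\<And>x. x \<in> U \<Longrightarrow> lap (\<lambda>y. c * f y) x = c * lap f x"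
proof -
  have fd: "\<And>x. x \<in> U \<Longrightarrow> f differentiable (at x)" and fdd: "\<And>i x. i \<in> Basis \<Longrightarrow> x \<in> U \<Longrightarrow> pd i f differentiable (at x)"
    using assms(2) unfolding C2i_def by auto
  have eq: "\<And>i y. y \<in> U \<Longrightarrow> pd i (\<lambda>y. c * f y) y = c * pd i f y"
    by (rule pd_scale[OF fd])
  have d: "(\<lambda>y. c * f y) differentiable (at x)" if "x \<in> U" for x
    using fd[OF that] by (simp add: differentiable_mult)
  have dd: "pd i (\<lambda>y. c * f y) differentiable (at x)" if "x \<in> U" "i \<in> Basis" for x i
  proof -
    have "(\<lambda>y. c * pd i f y) differentiable (at x)"
      using fdd[OF that(2,1)] by (simp add: differentiable_mult)
    note h = this
    have e: "\<And>y. y \<in> U \<Longrightarrow> c * pd i f y = pd i (\<lambda>y. c * f y) y" using eq by simp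
    show ?thesis by (rule differentiable_cong_open[OF assms(1) that(1) e h])
  qed
  show "C2i U (\<lambda>y. c * f y)" using d dd unfolding C2i_def by blast
  fix x assume x: "x \<in> U"
  have "pd i (pd i (\<lambda>y. c * f y)) x = c * pd i (pd i f) x" if i: "i \<in> Basis" for i
  proof -
    have "pd i (pd i (\<lambda>y. c * f y)) x = pd i (\<lambda>y. c * pd i f y) x"
      by (rule pd_cong_open[OF assms(1) x eq])
    also have "\<dots> = c * pd i (pd i f) x"
      by (rule pd_scale[OF fdd[OF i x]])
    finally show ?thesis .
  qed
  then show "lap (\<lambda>y. c * f y) x = c * lap f x"
    unfolding lap_def by (simp add: sum_distrib_left)
qed

lemma C2i_const: "C2i U (\<lambda>y. c)" "lap (\<lambda>y. c) x = 0"
  unfolding C2i_def lap_def by (auto simp: pd_const_fun)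

lemma C2i_diff:
  assumes "open U" "C2i U f" "C2i U g"
  shows "C2i U (\<lambda>y. f y - g y)" "\<And>x. x \<in> U \<Longrightarrow> lap (\<lambda>y. f y - g y) x = lap f x - lap g x"
proof -
  have a1: "C2i U (\<lambda>y. (-1) * g y)" by (rule C2i_scale(1)[OF assms(1,3)])
  have a2: "\<And>x. x \<in> U \<Longrightarrow> lap (\<lambda>y. (-1) * g y) x = (-1) * lap g x" by (rule C2i_scale(2)[OF assms(1,3)])
  note a = a1 a2
  have b: "C2i U (\<lambda>y. f y + (-1) * g y)" "\<And>x. x \<in> U \<Longrightarrow> lap (\<lambda>y. f y + (-1) * g y) x = lap f x + lap (\<lambda>y. (-1) * g y) x"
    using C2i_add[OF assms(1,2) a(1)] by auto
  have e: "(\<lambda>y. f y + (-1) * g y) = (\<lambda>y. f y - g y)" by auto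
  show "C2i U (\<lambda>y. f y - g y)" using b(1) unfolding e .
  fix x assume "x \<in> U" then show "lap (\<lambda>y. f y - g y) x = lap f x - lap g x" using a(2) b(2) unfolding e by simp
qed


lemma smooth_Ck: "smooth_on U w \<Longrightarrow> Ck_on k U w"
  unfolding smooth_on_def by blast

lemma smooth_on_mono: "smooth_on U w \<Longrightarrow> V \<subseteq> U \<Longrightarrow> smooth_on V w"
  unfolding smooth_on_def Ck_on_def by (meson continuous_on_subset subsetD)

lemma sm_diff: "smooth_on U w \<Longrightarrow> y \<in> U \<Longrightarrow> w differentiable (at y)"
proof -
  assume a: "smooth_on U w" "y \<in> U"
  have "Ck_on 1 U w" by (rule smooth_Ck[OF a(1)])
  then have "\<forall>x\<in>U. pds [] w differentiable (at x)" unfolding Ck_on_def by (erule_tac x="[]" in allE) simp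
  then show ?thesis using \<open>y \<in> U\<close> by simp
qed

lemma sm_pd_diff: "smooth_on U w \<Longrightarrow> i \<in> Basis \<Longrightarrow> y \<in> U \<Longrightarrow> pd i w differentiable (at y)"
proof -
  assume a: "smooth_on U w" "i \<in> Basis" "y \<in> U"
  have "Ck_on 2 U w" by (rule smooth_Ck[OF a(1)])
  then have "\<forall>x\<in>U. pds [i] w differentiable (at x)" unfolding Ck_on_def using a(2) by (erule_tac x="[i]" in allE) simp
  then show ?thesis using \<open>y \<in> U\<close> by simp
qed

lemma sm_pd_cont: "smooth_on U w \<Longrightarrow> i \<in> Basis \<Longrightarrow> continuous_on U (pd i w)"
proof -
  assume a: "smooth_on U w" "i \<in> Basis"
  have "Ck_on 2 U w" by (rule smooth_Ck[OF a(1)])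
  then have "continuous_on U (pds [i] w)" unfolding Ck_on_def using a(2) by (erule_tac x="[i]" in allE) simp
  then show ?thesis by simp
qed

lemma sm_pdpd_cont: "smooth_on U w \<Longrightarrow> i \<in> Basis \<Longrightarrow> j \<in> Basis \<Longrightarrow> continuous_on U (pd j (pd i w))"
proof -
  assume a: "smooth_on U w" "i \<in> Basis" "j \<in> Basis"
  have "Ck_on 2 U w" by (rule smooth_Ck[OF a(1)])
  then have "continuous_on U (pds [j,i] w)" unfolding Ck_on_def using a(2,3) by (erule_tac x="[j,i]" in allE) simp
  then show ?thesis by simp
qed

lemma sm_C2i: "smooth_on U w \<Longrightarrow> C2i U w"
  unfolding C2i_def using sm_diff sm_pd_diff by blast

lemma sm_grad_cont: "smooth_on U w \<Longrightarrow> continuous_on U (grad w)"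
proof -
  assume a: "smooth_on U w"
  have "continuous_on U (\<lambda>x. \<Sum>i\<in>Basis. pd i w x *\<^sub>R i)"
    by (intro continuous_intros continuous_on_sum continuous_on_scaleR sm_pd_cont[OF a]) auto
  then show ?thesis unfolding grad_def[abs_def] .
qed

lemma sm_lap_cont: "smooth_on U w \<Longrightarrow> continuous_on U (lap w)"
proof -
  assume a: "smooth_on U w"
  have "continuous_on U (\<lambda>x. \<Sum>i\<in>Basis. pd i (pd i w) x)"
    by (intro continuous_on_sum sm_pdpd_cont[OF a]) auto
  then show ?thesis unfolding lap_def[abs_def] .
qed

lemma ldf_props:
  assumes "local_defining_fun \<Omega> x r \<phi>"
  shows "r > 0" "smooth_on (ball x r) \<phi>" "\<And>y. y \<in> ball x r \<Longrightarrow> grad \<phi> y \<noteq> 0"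
    "\<And>y. y \<in> ball x r \<Longrightarrow> y \<in> \<Omega> \<longleftrightarrow> \<phi> y < 0"
  using assms unfolding local_defining_fun_def by blast+

lemma ldf_zero:
  assumes "open \<Omega>" "x \<in> frontier \<Omega>" "local_defining_fun \<Omega> x r \<phi>"
  shows "\<phi> x = 0"
proof -
  note L = ldf_props[OF assms(3)]
  have xb: "x \<in> ball x r" using L(1) by simp
  have "x \<notin> \<Omega>" using assms(1,2) by (simp add: frontier_def interior_open)
  then have ge: "\<phi> x \<ge> 0" using L(4)[OF xb] by simp
  have cont: "continuous (at x) \<phi>"
    using sm_diff[OF L(2) xb] differentiable_imp_continuous_within by blast
  have "\<phi> x \<le> 0"
  proof (rule ccontr)
    assume "\<not> \<phi> x \<le> 0"
    then have pos: "\<phi> x > 0" by simp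
    have "(\<phi> \<longlongrightarrow> \<phi> x) (at x)" using cont continuous_at by blast
    then have "eventually (\<lambda>y. 0 < \<phi> y) (at x)" using order_tendstoD(1) pos by blast
    then obtain d where d: "d > 0" "\<And>y. y \<noteq> x \<Longrightarrow> dist y x < d \<Longrightarrow> 0 < \<phi> y"
      unfolding eventually_at by blast
    have "x \<in> closure \<Omega>" using assms(2) by (simp add: frontier_def)
    moreover have "min d r > 0" using d(1) L(1) by simp
    ultimately obtain y where y: "y \<in> \<Omega>" "dist y x < min d r"
      unfolding closure_approachable by blast
    then have "y \<in> ball x r" by (simp add: dist_commute)
    then have "\<phi> y < 0" using L(4) y(1) by blast
    moreover have "y \<noteq> x" using y(1) \<open>x \<notin> \<Omega>\<close> by blast
    then have "\<phi> y > 0" using d(2) y(2) by simp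
    ultimately show False by simp
  qed
  then show ?thesis using ge by simp
qed

lemma ldf_restrict:
  assumes "local_defining_fun \<Omega> x r \<phi>" "r' > 0" "ball y r' \<subseteq> ball x r"
  shows "local_defining_fun \<Omega> y r' \<phi>"
proof -
  note L = ldf_props[OF assms(1)]
  show ?thesis unfolding local_defining_fun_def
    using assms(2,3) smooth_on_mono[OF L(2) assms(3)] L(3,4) by blast
qed

lemma slope_pos_within:
  fixes F :: "real \<Rightarrow> real"
  assumes "(F has_derivative (\<lambda>s. s * c)) (at 0 within {0..e})" "c > 0" "e > 0"
  shows "\<exists>s. 0 < s \<and> s \<le> e \<and> F 0 < F s"
proof -
  from assms(1) have "\<forall>\<epsilon>>0. \<exists>d>0. \<forall>x'\<in>{0..e}. 0 < norm (x' - 0) \<and> norm (x' - 0) < d \<longrightarrow>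
      norm (F x' - F 0 - (x' - 0) * c) / norm (x' - 0) < \<epsilon>"
    unfolding has_derivative_within' by blast
  then obtain d where d: "d > 0" "\<And>x'. x' \<in> {0..e} \<Longrightarrow> 0 < norm x' \<Longrightarrow> norm x' < d \<Longrightarrow>
      norm (F x' - F 0 - x' * c) / norm x' < c / 2"
    using assms(2) by (metis diff_zero half_gt_zero)
  define s where "s = min e (d/2)"
  have s: "0 < s" "s \<le> e" "s < d" using d(1) assms(3) by (auto simp: s_def)
  have "norm (F s - F 0 - s * c) / norm s < c / 2" using d(2)[of s] s by auto
  then have "\<bar>F s - F 0 - s * c\<bar> < c / 2 * s" using s by (simp add: divide_less_eq)
  then have "F s - F 0 > s * c - c / 2 * s" by linarith
  moreover have "s * c - c / 2 * s > 0" using s assms(2) by simp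
  ultimately show ?thesis using s by auto
qed

lemma bdry_max:
  fixes w q \<phi> :: "'a::euclidean_space \<Rightarrow> real"
  assumes \<Omega>: "open \<Omega>" and y: "y \<in> frontier \<Omega>" and ldf: "local_defining_fun \<Omega> y r \<phi>"
    and wD: "(w has_derivative D) (at y within closure \<Omega>)" and D0: "D (grad \<phi> y) = 0"
    and qQ: "(q has_derivative Q) (at y)"
    and \<rho>: "\<rho> > 0" and mx: "\<forall>z\<in>closure \<Omega> \<inter> ball y \<rho>. w z + q z \<le> w y + q y"
  shows "Q (grad \<phi> y) \<ge> 0"
proof (rule ccontr)
  assume neg: "\<not> ?thesis"
  define d where "d = grad \<phi> y"
  note L = ldf_props[OF ldf]
  have yb: "y \<in> ball y r" using L(1) by simp
  have nz: "d \<noteq> 0" using L(3)[OF yb] d_def by simp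
  have \<phi>0: "\<phi> y = 0" by (rule ldf_zero[OF \<Omega> y ldf])
  have \<phi>D: "(\<phi> has_derivative (\<lambda>h. d \<bullet> h)) (at y)"
    using hd_grad[OF sm_diff[OF L(2) yb]] d_def by simp
  have pD: "((\<lambda>s::real. y - s *\<^sub>R d) has_derivative (\<lambda>s. - (s *\<^sub>R d))) (at s0 within T)" for s0 T
    by (auto intro!: derivative_eq_intros)
  have "((\<lambda>s. \<phi> (y - s *\<^sub>R d)) has_derivative (\<lambda>s. d \<bullet> (- (s *\<^sub>R d)))) (at 0)"
  proof -
    have e0: "(\<lambda>s. y - s *\<^sub>R d) 0 = y" by simp
    have "(\<phi> has_derivative (\<lambda>h. d \<bullet> h)) (at ((\<lambda>s. y - s *\<^sub>R d) 0) within range (\<lambda>s::real. y - s *\<^sub>R d))"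
      unfolding e0 by (rule has_derivative_at_withinI[OF \<phi>D])
    from has_derivative_in_compose[OF pD[of 0 UNIV] this] show ?thesis by simp
  qed
  moreover have "(\<lambda>s. d \<bullet> (- (s *\<^sub>R d))) = (*) (- (d \<bullet> d))" by (auto simp: fun_eq_iff)
  ultimately have "((\<lambda>s. \<phi> (y - s *\<^sub>R d)) has_real_derivative (- (d \<bullet> d))) (at 0)"
    unfolding has_field_derivative_def by simp
  moreover have "- (d \<bullet> d) < 0" using nz by simp
  ultimately have "\<exists>d'>0. \<forall>h>0. h < d' \<longrightarrow> \<phi> (y - (0 + h) *\<^sub>R d) < \<phi> (y - 0 *\<^sub>R d)"
    by (rule DERIV_neg_dec_right)
  then obtain \<delta>1 where \<delta>1: "\<delta>1 > 0" "\<And>h. h > 0 \<Longrightarrow> h < \<delta>1 \<Longrightarrow> \<phi> (y - h *\<^sub>R d) < 0"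
    using \<phi>0 by auto
  define e where "e = min (\<delta>1/2) (min r \<rho> / (2 * norm d))"
  have e: "e > 0" using \<delta>1 L(1) \<rho> nz by (simp add: e_def)
  have inS: "y - s *\<^sub>R d \<in> closure \<Omega> \<inter> ball y \<rho>" if s: "s \<in> {0..e}" for s
  proof -
    have ns: "norm (s *\<^sub>R d) \<le> min r \<rho> / 2"
    proof -
      have "norm (s *\<^sub>R d) = s * norm d" using s by simp
      also have "\<dots> \<le> e * norm d" using s by (simp add: mult_right_mono)
      also have "\<dots> \<le> min r \<rho> / (2 * norm d) * norm d"
        by (rule mult_right_mono) (auto simp: e_def)
      also have "\<dots> = min r \<rho> / 2" using nz by simp
      finally show ?thesis .
    qed
    have b1: "y - s *\<^sub>R d \<in> ball y \<rho>" using ns \<rho> L(1) by (simp add: dist_norm)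
    have b2: "y - s *\<^sub>R d \<in> ball y r" using ns \<rho> L(1) by (simp add: dist_norm)
    show ?thesis
    proof (cases "s = 0")
      case True
      then show ?thesis using y \<rho> by (simp add: frontier_def)
    next
      case False
      then have "s > 0" using s by simp
      moreover have "s < \<delta>1" using s e_def \<delta>1(1) by auto
      ultimately have "\<phi> (y - s *\<^sub>R d) < 0" using \<delta>1(2) by blast
      then have "y - s *\<^sub>R d \<in> \<Omega>" using L(4)[OF b2] by simp
      then show ?thesis using b1 closure_subset by blast
    qed
  qed
  have img: "(\<lambda>s. y - s *\<^sub>R d) ` {0..e} \<subseteq> closure \<Omega>" using inS by blast
  have w1: "((\<lambda>s. w (y - s *\<^sub>R d)) has_derivative (\<lambda>s. D (- (s *\<^sub>R d)))) (at 0 within {0..e})"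
    by (rule has_derivative_in_compose[OF pD]) (use has_derivative_subset[OF wD img] in simp)
  have q1: "((\<lambda>s. q (y - s *\<^sub>R d)) has_derivative (\<lambda>s. Q (- (s *\<^sub>R d)))) (at 0 within {0..e})"
    by (rule has_derivative_in_compose[OF pD]) (use has_derivative_subset[OF qQ[unfolded at_within_def[symmetric]]] in \<open>simp add: has_derivative_at_withinI\<close>)
  have linD: "linear D" using wD has_derivative_linear by blast
  have linQ: "linear Q" using qQ has_derivative_linear by blast
  have "((\<lambda>s. w (y - s *\<^sub>R d) + q (y - s *\<^sub>R d)) has_derivative (\<lambda>s. D (- (s *\<^sub>R d)) + Q (- (s *\<^sub>R d)))) (at 0 within {0..e})"
    by (rule has_derivative_add[OF w1 q1])
  moreover have "(\<lambda>s. D (- (s *\<^sub>R d)) + Q (- (s *\<^sub>R d))) = (\<lambda>s. s * (- Q d))"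
  proof
    fix s :: real
    have "D (- (s *\<^sub>R d)) = - (s * D d)" using linD by (simp add: linear_scale linear_neg)
    moreover have "Q (- (s *\<^sub>R d)) = - (s * Q d)" using linQ by (simp add: linear_scale linear_neg)
    moreover have "D d = 0" using D0 d_def by simp
    ultimately show "D (- (s *\<^sub>R d)) + Q (- (s *\<^sub>R d)) = s * (- Q d)" by simp
  qed
  ultimately have F': "((\<lambda>s. w (y - s *\<^sub>R d) + q (y - s *\<^sub>R d)) has_derivative (\<lambda>s. s * (- Q d))) (at 0 within {0..e})"
    by simp
  have c: "- Q d > 0" using neg d_def by simp
  from slope_pos_within[OF F' c e] obtain s where s: "0 < s" "s \<le> e" "w (y - 0 *\<^sub>R d) + q (y - 0 *\<^sub>R d) < w (y - s *\<^sub>R d) + q (y - s *\<^sub>R d)"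
    by blast
  have "y - s *\<^sub>R d \<in> closure \<Omega> \<inter> ball y \<rho>" using inS s by simp
  then have "w (y - s *\<^sub>R d) + q (y - s *\<^sub>R d) \<le> w y + q y" using mx by blast
  then show False using s(3) by simp
qed


lemma line_deriv:
  fixes G :: "'a::euclidean_space \<Rightarrow> real"
  assumes "G differentiable (at (x + s *\<^sub>R i))"
  shows "((\<lambda>s. G (x + s *\<^sub>R i)) has_real_derivative pd i G (x + s *\<^sub>R i)) (at s)"
proof -
  have pD: "((\<lambda>s::real. x + s *\<^sub>R i) has_derivative (\<lambda>s. s *\<^sub>R i)) (at s within UNIV)"
    by (auto intro!: derivative_eq_intros)
  have GD: "(G has_derivative (\<lambda>h. grad G (x + s *\<^sub>R i) \<bullet> h)) (at ((\<lambda>s. x + s *\<^sub>R i) s) within range (\<lambda>s::real. x + s *\<^sub>R i))"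
    using has_derivative_at_withinI[OF hd_grad[OF assms]] by simp
  have "((\<lambda>s. G (x + s *\<^sub>R i)) has_derivative (\<lambda>t. grad G (x + s *\<^sub>R i) \<bullet> (t *\<^sub>R i))) (at s)"
    using has_derivative_in_compose[OF pD GD] by simp
  moreover have "(\<lambda>t. grad G (x + s *\<^sub>R i) \<bullet> (t *\<^sub>R i)) = (*) (pd i G (x + s *\<^sub>R i))"
    using fd_grad[OF assms, of i] by (auto simp: fun_eq_iff pd_def)
  ultimately show ?thesis unfolding has_field_derivative_def by simp
qed

lemma interior_max_1d:
  fixes g g1 :: "real \<Rightarrow> real"
  assumes \<delta>: "\<delta> > 0" and gd: "\<And>s. \<bar>s\<bar> < \<delta> \<Longrightarrow> (g has_real_derivative g1 s) (at s)"
    and g1d: "(g1 has_real_derivative c) (at 0)" and mx: "\<And>s. \<bar>s\<bar> < \<delta> \<Longrightarrow> g s \<le> g 0"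
  shows "c \<le> 0"
proof (rule ccontr)
  assume "\<not> c \<le> 0"
  then have c: "c > 0" by simp
  have "g1 0 = 0"
    by (rule DERIV_local_max[OF gd[of 0] \<delta>]) (use \<delta> mx in auto)
  from DERIV_pos_inc_right[OF g1d c] obtain d where d: "d > 0" "\<And>h. h > 0 \<Longrightarrow> h < d \<Longrightarrow> g1 0 < g1 (0 + h)"
    by blast
  define h where "h = min d \<delta> / 2"
  have h: "0 < h" "h < d" "h < \<delta>" using d(1) \<delta> by (auto simp: h_def)
  have "\<And>x. 0 \<le> x \<Longrightarrow> x \<le> h \<Longrightarrow> (g has_real_derivative g1 x) (at x)"
    using gd h by auto
  from MVT2[OF h(1) this] obtain z where z: "0 < z" "z < h" "g h - g 0 = (h - 0) * g1 z" by blast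
  have "g1 z > 0" using d(2)[of z] z h \<open>g1 0 = 0\<close> by simp
  then have "h * g1 z > 0" using h(1) by simp
  then have "g h > g 0" using z(3) by simp
  moreover have "g h \<le> g 0" using mx h by simp
  ultimately show False by simp
qed

lemma interior_max_pd:
  fixes F :: "'a::euclidean_space \<Rightarrow> real"
  assumes U: "open U" and x: "x \<in> U" and mx: "\<And>y. y \<in> U \<Longrightarrow> F y \<le> F x"
    and C: "C2i U F" and i: "i \<in> Basis"
  shows "pd i (pd i F) x \<le> 0"
proof -
  obtain \<delta> where \<delta>: "\<delta> > 0" "ball x \<delta> \<subseteq> U" using U x open_contains_ball by blast
  have ni: "norm i = 1" using i by simp
  have inU: "x + s *\<^sub>R i \<in> U" if "\<bar>s\<bar> < \<delta>" for s
  proof -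
    have "dist x (x + s *\<^sub>R i) = \<bar>s\<bar>" using ni by (simp add: dist_norm)
    then show ?thesis using that \<delta>(2) by auto
  qed
  have Fd: "\<And>y. y \<in> U \<Longrightarrow> F differentiable (at y)" and F1d: "\<And>y. y \<in> U \<Longrightarrow> pd i F differentiable (at y)"
    using C i unfolding C2i_def by auto
  have gd: "((\<lambda>s. F (x + s *\<^sub>R i)) has_real_derivative pd i F (x + s *\<^sub>R i)) (at s)" if "\<bar>s\<bar> < \<delta>" for s
    by (rule line_deriv[OF Fd[OF inU[OF that]]])
  have g1d: "((\<lambda>s. pd i F (x + s *\<^sub>R i)) has_real_derivative pd i (pd i F) (x + 0 *\<^sub>R i)) (at 0)"
    by (rule line_deriv) (use F1d x in simp)
  show ?thesis
    by (rule interior_max_1d[OF \<delta>(1) gd g1d[simplified]]) (use mx inU in auto)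
qed

lemma interior_max_lap:
  fixes F :: "'a::euclidean_space \<Rightarrow> real"
  assumes "open U" "x \<in> U" "\<And>y. y \<in> U \<Longrightarrow> F y \<le> F x" "C2i U F"
  shows "lap F x \<le> 0"
  unfolding lap_def by (rule sum_nonpos) (use interior_max_pd[OF assms] in blast)


lemma lip_inner:
  fixes \<psi> :: "'a::euclidean_space \<Rightarrow> real"
  assumes "convex S" "\<And>z. z \<in> S \<Longrightarrow> (\<psi> has_derivative (\<lambda>h. a z \<bullet> h)) (at z)"
    "\<And>z. z \<in> S \<Longrightarrow> norm (a z) \<le> B" "x \<in> S" "y \<in> S"
  shows "\<bar>\<psi> x - \<psi> y\<bar> \<le> B * norm (x - y)"
proof -
  have "norm (\<psi> x - \<psi> y) \<le> B * norm (x - y)"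
  proof (rule differentiable_bound[OF assms(1) _ _ assms(4,5)])
    fix z assume z: "z \<in> S"
    show "(\<psi> has_derivative (\<lambda>h. a z \<bullet> h)) (at z within S)"
      using assms(2)[OF z] by (rule has_derivative_at_withinI)
    show "onorm (\<lambda>h. a z \<bullet> h) \<le> B"
    proof (rule onorm_le)
      fix h
      have "norm (a z \<bullet> h) \<le> norm (a z) * norm h" by (simp add: Cauchy_Schwarz_ineq2)
      also have "\<dots> \<le> B * norm h" using assms(3)[OF z] by (simp add: mult_right_mono)
      finally show "norm (a z \<bullet> h) \<le> B * norm h" .
    qed
  qed
  then show ?thesis by simp
qed

lemma nsq_deriv: "((\<lambda>y. (y - c) \<bullet> (y - c)) has_derivative (\<lambda>h. 2 * ((y - c) \<bullet> h))) (at y)"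
proof -
  have "((\<lambda>y. (y - c) \<bullet> (y - c)) has_derivative (\<lambda>h. h \<bullet> (y - c) + (y - c) \<bullet> h)) (at y)"
    by (auto intro!: derivative_eq_intros)
  moreover have "(\<lambda>h. h \<bullet> (y - c) + (y - c) \<bullet> h) = (\<lambda>h. 2 * ((y - c) \<bullet> h))"
    by (auto simp: fun_eq_iff inner_commute)
  ultimately show ?thesis by simp
qed

lemma nsq_pd: "pd i (\<lambda>y. (y - c) \<bullet> (y - c)) y = 2 * ((y - c) \<bullet> i)"
  using pd_from_hd[OF nsq_deriv] .

lemma nsq_pd_fun: "pd i (\<lambda>y. (y - c) \<bullet> (y - c)) = (\<lambda>y. 2 * ((y - c) \<bullet> i))"
  using nsq_pd by blast

lemma lin_deriv: "((\<lambda>y. 2 * ((y - c) \<bullet> i)) has_derivative (\<lambda>h. 2 * (h \<bullet> i))) (at y)"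
  by (auto intro!: derivative_eq_intros)

lemma nsq_C2i:
  fixes c :: "'a::euclidean_space"
  shows "C2i U (\<lambda>y. (y - c) \<bullet> (y - c))" "lap (\<lambda>y. (y - c) \<bullet> (y - c)) y = 2 * DIM('a)"
proof -
  show "C2i U (\<lambda>y. (y - c) \<bullet> (y - c))"
    unfolding C2i_def nsq_pd_fun
    using nsq_deriv lin_deriv differentiable_def by blast
  have "pd i (pd i (\<lambda>y. (y - c) \<bullet> (y - c))) y = 2" if i: "i \<in> Basis" for i
  proof -
    have "pd i (\<lambda>y. 2 * ((y - c) \<bullet> i)) y = 2 * (i \<bullet> i)" by (rule pd_from_hd[OF lin_deriv])
    then show ?thesis unfolding nsq_pd_fun using i by simp
  qed
  then show "lap (\<lambda>y. (y - c) \<bullet> (y - c)) y = 2 * DIM('a)"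
    unfolding lap_def by simp
qed

lemma helper_neg1: "(\<eta>::real) > 0 \<Longrightarrow> - X \<le> B / 2 \<Longrightarrow> - \<eta> * X \<le> \<eta> * B / 2"
  using mult_left_mono[of "-X" "B/2" \<eta>] by simp

lemma helper_neg2: "(\<eta>::real) > 0 \<Longrightarrow> B / 2 \<le> X \<Longrightarrow> - \<eta> * X \<le> - (\<eta> * B / 2)"
  using mult_left_mono[of "B/2" X \<eta>] by simp

lemma helper_neg3: "(\<eta>::real) > 0 \<Longrightarrow> A \<le> B \<Longrightarrow> - \<eta> * B \<le> - \<eta> * A"
  using mult_left_mono[of A B \<eta>] by simp

lemma ar1: "- (a::real) \<le> b \<Longrightarrow> 0 \<le> n \<Longrightarrow> b \<le> c \<Longrightarrow> - (a + n) \<le> c" by linarith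
lemma ar2: "- (a::real) \<le> b \<Longrightarrow> n = c \<Longrightarrow> b \<le> c / 2 \<Longrightarrow> c / 2 \<le> a + n" by linarith

lemma local_penalty:
  fixes \<phi> :: "'a::euclidean_space \<Rightarrow> real"
  assumes \<Omega>: "open \<Omega>" and x1: "x1 \<in> frontier \<Omega>" and ldf: "local_defining_fun \<Omega> x1 r0 \<phi>"
  obtains R K L where "R > 0" "K > 0" "L \<ge> 0" "cball x1 R \<subseteq> ball x1 r0"
    "\<And>r \<eta> y. 0 < r \<Longrightarrow> r \<le> R \<Longrightarrow> 0 < \<eta> \<Longrightarrow> y \<in> cball x1 r \<Longrightarrow>
        - \<eta> * (r / K * \<phi> y + (y - x1) \<bullet> (y - x1)) \<le> \<eta> * r\<^sup>2 / 2"
    "\<And>r \<eta> y. 0 < r \<Longrightarrow> r \<le> R \<Longrightarrow> 0 < \<eta> \<Longrightarrow> dist x1 y = r \<Longrightarrow>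
        - \<eta> * (r / K * \<phi> y + (y - x1) \<bullet> (y - x1)) \<le> - (\<eta> * r\<^sup>2 / 2)"
    "\<And>r \<eta> y. 0 < r \<Longrightarrow> r \<le> R \<Longrightarrow> 0 < \<eta> \<Longrightarrow> y \<in> frontier \<Omega> \<Longrightarrow> y \<in> ball x1 r \<Longrightarrow>
        \<exists>r'. local_defining_fun \<Omega> y r' \<phi> \<and>
          ((\<lambda>z. - \<eta> * (r / K * \<phi> z + (z - x1) \<bullet> (z - x1))) has_derivative
              (\<lambda>h. - \<eta> * (r / K * (grad \<phi> y \<bullet> h) + 2 * ((y - x1) \<bullet> h)))) (at y) \<and>
          - \<eta> * (r / K * (grad \<phi> y \<bullet> grad \<phi> y) + 2 * ((y - x1) \<bullet> grad \<phi> y)) < 0"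
    "\<And>r \<eta>. C2i (ball x1 R) (\<lambda>z. - \<eta> * (r / K * \<phi> z + (z - x1) \<bullet> (z - x1)))"
    "\<And>r \<eta> y. 0 < r \<Longrightarrow> r \<le> R \<Longrightarrow> 0 < \<eta> \<Longrightarrow> y \<in> ball x1 R \<Longrightarrow>
        lap (\<lambda>z. - \<eta> * (r / K * \<phi> z + (z - x1) \<bullet> (z - x1))) y \<ge> - \<eta> * (R / K * L + 2 * DIM('a))"
proof -
  note L0 = ldf_props[OF ldf]
  have x1b: "x1 \<in> ball x1 r0" using L0(1) by simp
  define g0 where "g0 = norm (grad \<phi> x1)"
  have g0: "g0 > 0" using L0(3)[OF x1b] g0_def by simp
  define \<theta> where "\<theta> = g0 / 32"
  define K where "K = 2 * (g0 + \<theta>)"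
  have \<theta>: "\<theta> > 0" and K: "K > 0" using g0 by (auto simp: \<theta>_def K_def)
  have cg: "continuous (at x1) (grad \<phi>)"
    using sm_grad_cont[OF L0(2)] continuous_on_eq_continuous_at[OF open_ball] x1b by blast
  then obtain R1 where R1: "R1 > 0" "\<And>y. dist y x1 < R1 \<Longrightarrow> dist (grad \<phi> y) (grad \<phi> x1) < \<theta>"
    unfolding continuous_at_eps_delta using \<theta> by blast
  define R where "R = min (R1/2) (r0/2)"
  have R: "R > 0" using R1 L0(1) by (simp add: R_def)
  have cb: "cball x1 R \<subseteq> ball x1 r0" using L0(1) by (auto simp: R_def)
  have gb: "norm (grad \<phi> y - grad \<phi> x1) \<le> \<theta>" if "y \<in> cball x1 R" for y
  proof -
    have "dist y x1 < R1" using that R1(1) by (auto simp: R_def dist_commute)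
    then show ?thesis using R1(2) by (simp add: dist_norm less_imp_le)
  qed
  have gup: "norm (grad \<phi> y) \<le> g0 + \<theta>" if "y \<in> cball x1 R" for y
    using gb[OF that] norm_triangle_sub[of "grad \<phi> y" "grad \<phi> x1"] g0_def by linarith
  have glow: "norm (grad \<phi> y) \<ge> g0 - \<theta>" if "y \<in> cball x1 R" for y
    using gb[OF that] norm_triangle_ineq2[of "grad \<phi> x1" "grad \<phi> y"] g0_def
    by (simp add: norm_minus_commute)
  have \<phi>d: "(\<phi> has_derivative (\<lambda>h. grad \<phi> z \<bullet> h)) (at z)" if "z \<in> cball x1 R" for z
    using hd_grad[OF sm_diff[OF L0(2)]] cb that by blast
  have \<phi>0: "\<phi> x1 = 0" by (rule ldf_zero[OF \<Omega> x1 ldf])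
  have x1c: "x1 \<in> cball x1 R" using R by simp
  have \<phi>b: "\<bar>\<phi> y\<bar> \<le> (g0 + \<theta>) * norm (y - x1)" if "y \<in> cball x1 R" for y
    using lip_inner[OF convex_cball \<phi>d gup that x1c] \<phi>0 by simp
  have "compact (lap \<phi> ` cball x1 R)"
    by (rule compact_continuous_image) (use continuous_on_subset[OF sm_lap_cont[OF L0(2)] cb] in auto)
  then obtain L1 where L1: "\<forall>v \<in> lap \<phi> ` cball x1 R. norm v \<le> L1"
    using compact_imp_bounded bounded_iff by metis
  define L where "L = max L1 0"
  have Lnn: "L \<ge> 0" by (simp add: L_def)
  have Lb: "\<bar>lap \<phi> y\<bar> \<le> L" if "y \<in> cball x1 R" for y
    using L1 that by (force simp: L_def)
  have KK: "r / K * ((g0 + \<theta>) * r) = r\<^sup>2 / 2" for r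
    using g0 \<theta> by (simp add: K_def field_simps power2_eq_square)
  have P1: "- \<eta> * (r / K * \<phi> y + (y - x1) \<bullet> (y - x1)) \<le> \<eta> * r\<^sup>2 / 2"
    if r: "0 < r" "r \<le> R" and \<eta>: "0 < \<eta>" and y: "y \<in> cball x1 r" for r \<eta> y
  proof -
    have yR: "y \<in> cball x1 R" using y r by auto
    have ny: "norm (y - x1) \<le> r" using y by (simp add: dist_norm norm_minus_commute)
    have "r / K * \<bar>\<phi> y\<bar> \<le> r / K * ((g0 + \<theta>) * norm (y - x1))"
      by (rule mult_left_mono[OF \<phi>b[OF yR]]) (use r K in simp)
    also have "\<dots> \<le> r / K * ((g0 + \<theta>) * r)"
      by (rule mult_left_mono) (use ny r K g0 \<theta> in auto)
    also have "\<dots> = r\<^sup>2 / 2" by (rule KK)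
    finally have a: "r / K * \<bar>\<phi> y\<bar> \<le> r\<^sup>2 / 2" .
    have "- (r / K * \<phi> y) \<le> r / K * \<bar>\<phi> y\<bar>"
      using r K by (simp add: abs_if mult_le_0_iff)
    moreover have "(y - x1) \<bullet> (y - x1) \<ge> 0" by simp
    ultimately have "- (r / K * \<phi> y + (y - x1) \<bullet> (y - x1)) \<le> r\<^sup>2 / 2"
      using a by (rule ar1)
    then show ?thesis by (rule helper_neg1[OF \<eta>])
  qed
  have P2: "- \<eta> * (r / K * \<phi> y + (y - x1) \<bullet> (y - x1)) \<le> - (\<eta> * r\<^sup>2 / 2)"
    if r: "0 < r" "r \<le> R" and \<eta>: "0 < \<eta>" and y: "dist x1 y = r" for r \<eta> y
  proof -
    have yR: "y \<in> cball x1 R" using y r by auto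
    have ny: "norm (y - x1) = r" using y by (simp add: dist_norm norm_minus_commute)
    have "r / K * \<bar>\<phi> y\<bar> \<le> r / K * ((g0 + \<theta>) * norm (y - x1))"
      by (rule mult_left_mono[OF \<phi>b[OF yR]]) (use r K in simp)
    also have "\<dots> = r\<^sup>2 / 2" using KK ny by simp
    finally have a: "r / K * \<bar>\<phi> y\<bar> \<le> r\<^sup>2 / 2" .
    have "- (r / K * \<phi> y) \<le> r / K * \<bar>\<phi> y\<bar>"
      using r K by (simp add: abs_if mult_le_0_iff)
    moreover have "(y - x1) \<bullet> (y - x1) = r\<^sup>2" using ny by (simp add: power2_norm_eq_inner[symmetric])
    ultimately have "r\<^sup>2 / 2 \<le> r / K * \<phi> y + (y - x1) \<bullet> (y - x1)" using a by (rule ar2)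
    then show ?thesis by (rule helper_neg2[OF \<eta>])
  qed
  have P3: "\<exists>r'. local_defining_fun \<Omega> y r' \<phi> \<and>
          ((\<lambda>z. - \<eta> * (r / K * \<phi> z + (z - x1) \<bullet> (z - x1))) has_derivative
              (\<lambda>h. - \<eta> * (r / K * (grad \<phi> y \<bullet> h) + 2 * ((y - x1) \<bullet> h)))) (at y) \<and>
          - \<eta> * (r / K * (grad \<phi> y \<bullet> grad \<phi> y) + 2 * ((y - x1) \<bullet> grad \<phi> y)) < 0"
    if r: "0 < r" "r \<le> R" and \<eta>: "0 < \<eta>" and yf: "y \<in> frontier \<Omega>" and yb: "y \<in> ball x1 r" for r \<eta> y
  proof -
    have yR: "y \<in> cball x1 R" using yb r by auto
    define r' where "r' = r0 - dist x1 y"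
    have r': "r' > 0" using yR cb by (auto simp: r'_def)
    have bsub: "ball y r' \<subseteq> ball x1 r0"
      by (auto simp: r'_def) (metis dist_triangle add.commute less_diff_eq order.strict_trans1)
    have ldf2: "local_defining_fun \<Omega> y r' \<phi>" by (rule ldf_restrict[OF ldf r' bsub])
    have \<phi>y: "\<phi> y = 0" by (rule ldf_zero[OF \<Omega> yf ldf2])
    have der: "((\<lambda>z. - \<eta> * (r / K * \<phi> z + (z - x1) \<bullet> (z - x1))) has_derivative
              (\<lambda>h. - \<eta> * (r / K * (grad \<phi> y \<bullet> h) + 2 * ((y - x1) \<bullet> h)))) (at y)"
      by (rule has_derivative_mult_right[OF has_derivative_add[OF has_derivative_mult_right[OF \<phi>d[OF yR]] nsq_deriv]])
    define d where "d = grad \<phi> y"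
    have \<psi>d: "((\<lambda>z. \<phi> z - d \<bullet> z) has_derivative (\<lambda>h. (grad \<phi> z - d) \<bullet> h)) (at z)" if "z \<in> cball x1 R" for z
    proof -
      have "((\<lambda>z. \<phi> z - d \<bullet> z) has_derivative (\<lambda>h. grad \<phi> z \<bullet> h - d \<bullet> h)) (at z)"
        by (rule has_derivative_diff[OF \<phi>d[OF that]]) (auto intro!: derivative_eq_intros)
      then show ?thesis by (simp add: inner_diff_left)
    qed
    have \<psi>b: "norm (grad \<phi> z - d) \<le> 2 * \<theta>" if "z \<in> cball x1 R" for z
    proof -
      have "norm (grad \<phi> z - d) \<le> norm (grad \<phi> z - grad \<phi> x1) + norm (grad \<phi> x1 - d)"
        by (rule norm_diff_triangle_le[of _ "grad \<phi> x1"]) simp_all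
      also have "\<dots> \<le> \<theta> + \<theta>" using gb[OF that] gb[OF yR] d_def by (simp add: norm_minus_commute)
      finally show ?thesis by simp
    qed
    have "\<bar>(\<phi> y - d \<bullet> y) - (\<phi> x1 - d \<bullet> x1)\<bar> \<le> 2 * \<theta> * norm (y - x1)"
      by (rule lip_inner[OF convex_cball \<psi>d \<psi>b yR x1c])
    then have "\<bar>d \<bullet> (y - x1)\<bar> \<le> 2 * \<theta> * norm (y - x1)"
      using \<phi>y \<phi>0 by (simp add: inner_diff_right abs_minus_commute)
    also have "\<dots> \<le> 2 * \<theta> * r"
      using yb \<theta> by (simp add: dist_norm norm_minus_commute less_imp_le)
    finally have dy: "\<bar>d \<bullet> (y - x1)\<bar> \<le> 2 * \<theta> * r" .
    have "(g0 - \<theta>)\<^sup>2 \<le> (norm d)\<^sup>2"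
      using glow[OF yR] g0 \<theta> d_def by (simp add: \<theta>_def power_mono)
    then have dd: "(g0 - \<theta>)\<^sup>2 \<le> d \<bullet> d" by (simp add: power2_norm_eq_inner)
    have key: "4 * \<theta> * K < (g0 - \<theta>)\<^sup>2"
      using g0 by (simp add: \<theta>_def K_def power2_eq_square field_simps)
    have "r / K * (g0 - \<theta>)\<^sup>2 \<le> r / K * (d \<bullet> d)"
      by (rule mult_left_mono[OF dd]) (use r K in simp)
    moreover have "r / K * (4 * \<theta> * K) < r / K * (g0 - \<theta>)\<^sup>2"
      by (rule mult_strict_left_mono[OF key]) (use r K in simp)
    moreover have "r / K * (4 * \<theta> * K) = 4 * \<theta> * r" using K by simp
    ultimately have "4 * \<theta> * r < r / K * (d \<bullet> d)" by linarith
    moreover have "2 * ((y - x1) \<bullet> d) \<ge> - (4 * \<theta> * r)"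
      using dy by (simp add: inner_commute abs_le_iff)
    ultimately have "r / K * (d \<bullet> d) + 2 * ((y - x1) \<bullet> d) > 0" by linarith
    then have "- \<eta> * (r / K * (d \<bullet> d) + 2 * ((y - x1) \<bullet> d)) < 0" using \<eta> by (simp add: mult_pos_pos)
    then show ?thesis using ldf2 der d_def by blast
  qed
  have Cphi: "C2i (ball x1 R) \<phi>"
    by (rule C2i_mono[OF sm_C2i[OF L0(2)]]) (use cb in auto)
  have P4: "C2i (ball x1 R) (\<lambda>z. - \<eta> * (r / K * \<phi> z + (z - x1) \<bullet> (z - x1)))" for r \<eta>
    by (rule C2i_scale(1)[OF open_ball C2i_add(1)[OF open_ball C2i_scale(1)[OF open_ball Cphi] nsq_C2i(1)]])
  have P5: "lap (\<lambda>z. - \<eta> * (r / K * \<phi> z + (z - x1) \<bullet> (z - x1))) y \<ge> - \<eta> * (R / K * L + 2 * DIM('a))"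
    if r: "0 < r" "r \<le> R" and \<eta>: "0 < \<eta>" and y: "y \<in> ball x1 R" for r \<eta> y
  proof -
    have C1: "C2i (ball x1 R) (\<lambda>z. r / K * \<phi> z)" by (rule C2i_scale(1)[OF open_ball Cphi])
    have C2: "C2i (ball x1 R) (\<lambda>z. r / K * \<phi> z + (z - x1) \<bullet> (z - x1))"
      by (rule C2i_add(1)[OF open_ball C1 nsq_C2i(1)])
    have "lap (\<lambda>z. - \<eta> * (r / K * \<phi> z + (z - x1) \<bullet> (z - x1))) y
        = - \<eta> * lap (\<lambda>z. r / K * \<phi> z + (z - x1) \<bullet> (z - x1)) y"
      by (rule C2i_scale(2)[OF open_ball C2 y])
    also have "lap (\<lambda>z. r / K * \<phi> z + (z - x1) \<bullet> (z - x1)) y = lap (\<lambda>z. r / K * \<phi> z) y + 2 * DIM('a)"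
      using C2i_add(2)[OF open_ball C1 nsq_C2i(1) y] nsq_C2i(2) by simp
    also have "lap (\<lambda>z. r / K * \<phi> z) y = r / K * lap \<phi> y"
      by (rule C2i_scale(2)[OF open_ball Cphi y])
    finally have e: "lap (\<lambda>z. - \<eta> * (r / K * \<phi> z + (z - x1) \<bullet> (z - x1))) y = - \<eta> * (r / K * lap \<phi> y + 2 * DIM('a))" .
    have yc: "y \<in> cball x1 R" using y by auto
    have "r / K * lap \<phi> y \<le> r / K * L"
      by (rule mult_left_mono) (use Lb[OF yc] r K in auto)
    also have "\<dots> \<le> R / K * L"
      by (rule mult_right_mono) (use r K Lnn in \<open>auto simp: divide_right_mono\<close>)
    finally have "r / K * lap \<phi> y + 2 * DIM('a) \<le> R / K * L + 2 * DIM('a)" by simp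
    from helper_neg3[OF \<eta> this] e show ?thesis by simp
  qed
  show ?thesis by (rule that[OF R K Lnn cb P1 P2 P3 P4 P5])
qed


definition NB :: "'a::euclidean_space set \<Rightarrow> ('a \<Rightarrow> real) \<Rightarrow> bool" where
  "NB \<Omega> w \<longleftrightarrow> (\<forall>x\<in>frontier \<Omega>. \<forall>r \<phi>. local_defining_fun \<Omega> x r \<phi> \<longrightarrow>
      (\<exists>D. (w has_derivative D) (at x within closure \<Omega>) \<and> D (grad \<phi> x) = 0))"

lemma interior_open_eq: "open \<Omega> \<Longrightarrow> interior \<Omega> = \<Omega>" by (simp add: interior_open)

lemma closure_cases: "open \<Omega> \<Longrightarrow> x \<in> closure \<Omega> \<Longrightarrow> x \<notin> \<Omega> \<Longrightarrow> x \<in> frontier \<Omega>"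
  by (simp add: frontier_def interior_open)

lemma C2i_cont:
  assumes "open U" "C2i U w" shows "continuous_on U w"
  using assms unfolding C2i_def
  by (meson continuous_at_imp_continuous_on differentiable_imp_continuous_within)

lemma max_principle:
  fixes w :: "'a::euclidean_space \<Rightarrow> real"
  assumes \<Omega>: "open \<Omega>" "bounded \<Omega>" and sb: "\<forall>x\<in>frontier \<Omega>. \<exists>r \<phi>. local_defining_fun \<Omega> x r \<phi>"
    and \<beta>: "\<beta> > 0"
    and C: "C2i \<Omega> w" and cont: "continuous_on (closure \<Omega>) w" and N: "NB \<Omega> w"
    and eq: "\<And>x. x \<in> \<Omega> \<Longrightarrow> - lap w x + \<beta> * w x \<le> K"
    and z: "z \<in> closure \<Omega>"
  shows "w z \<le> K / \<beta>"
proof (rule ccontr)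
  assume "\<not> w z \<le> K / \<beta>"
  then have wz: "w z > K / \<beta>" by simp
  have cpt: "compact (closure \<Omega>)" using \<Omega>(2) by (simp add: compact_closure)
  obtain x1 where x1: "x1 \<in> closure \<Omega>" "\<And>y. y \<in> closure \<Omega> \<Longrightarrow> w y \<le> w x1"
  proof -
    have "closure \<Omega> \<noteq> {}" using z by (metis empty_iff)
    from continuous_attains_sup[OF cpt this cont] show ?thesis using that by blast
  qed
  define M where "M = w x1"
  have MK: "M > K / \<beta>" using x1(2)[OF z] wz M_def by simp
  have \<beta>MK: "\<beta> * M > K" using MK \<beta> by (simp add: pos_divide_less_eq mult.commute[of \<beta>])
  show False
  proof (cases "x1 \<in> \<Omega>")
    case True
    have "lap w x1 \<le> 0"
      by (rule interior_max_lap[OF \<Omega>(1) True _ C]) (use x1(2) closure_subset in blast)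
    then show False using eq[OF True] \<beta>MK M_def by simp
  next
    case False
    then have fx1: "x1 \<in> frontier \<Omega>" using closure_cases[OF \<Omega>(1) x1(1)] by blast
    then obtain r0 \<phi> where ldf: "local_defining_fun \<Omega> x1 r0 \<phi>" using sb by blast
    obtain R K0 L where R: "R > 0" and K0: "K0 > 0" and L: "L \<ge> 0" and cb: "cball x1 R \<subseteq> ball x1 r0"
      and P1: "\<And>r \<eta> y. 0 < r \<Longrightarrow> r \<le> R \<Longrightarrow> 0 < \<eta> \<Longrightarrow> y \<in> cball x1 r \<Longrightarrow>
        - \<eta> * (r / K0 * \<phi> y + (y - x1) \<bullet> (y - x1)) \<le> \<eta> * r\<^sup>2 / 2"
      and P2: "\<And>r \<eta> y. 0 < r \<Longrightarrow> r \<le> R \<Longrightarrow> 0 < \<eta> \<Longrightarrow> dist x1 y = r \<Longrightarrow>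
        - \<eta> * (r / K0 * \<phi> y + (y - x1) \<bullet> (y - x1)) \<le> - (\<eta> * r\<^sup>2 / 2)"
      and P3: "\<And>r \<eta> y. 0 < r \<Longrightarrow> r \<le> R \<Longrightarrow> 0 < \<eta> \<Longrightarrow> y \<in> frontier \<Omega> \<Longrightarrow> y \<in> ball x1 r \<Longrightarrow>
        \<exists>r'. local_defining_fun \<Omega> y r' \<phi> \<and>
          ((\<lambda>z. - \<eta> * (r / K0 * \<phi> z + (z - x1) \<bullet> (z - x1))) has_derivative
              (\<lambda>h. - \<eta> * (r / K0 * (grad \<phi> y \<bullet> h) + 2 * ((y - x1) \<bullet> h)))) (at y) \<and>
          - \<eta> * (r / K0 * (grad \<phi> y \<bullet> grad \<phi> y) + 2 * ((y - x1) \<bullet> grad \<phi> y)) < 0"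
      and P4: "\<And>r \<eta>. C2i (ball x1 R) (\<lambda>z. - \<eta> * (r / K0 * \<phi> z + (z - x1) \<bullet> (z - x1)))"
      and P5: "\<And>r \<eta> y. 0 < r \<Longrightarrow> r \<le> R \<Longrightarrow> 0 < \<eta> \<Longrightarrow> y \<in> ball x1 R \<Longrightarrow>
        lap (\<lambda>z. - \<eta> * (r / K0 * \<phi> z + (z - x1) \<bullet> (z - x1))) y \<ge> - \<eta> * (R / K0 * L + 2 * DIM('a))"
    proof -
      show thesis by (rule local_penalty[OF \<Omega>(1) fx1 ldf that])
    qed
    have \<phi>0: "\<phi> x1 = 0" by (rule ldf_zero[OF \<Omega>(1) fx1 ldf])
    define \<delta>0 where "\<delta>0 = (M - K / \<beta>) / 2"
    have \<delta>0: "\<delta>0 > 0" using MK by (simp add: \<delta>0_def)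
    obtain \<rho> where \<rho>: "\<rho> > 0" "\<And>y. y \<in> closure \<Omega> \<Longrightarrow> dist y x1 < \<rho> \<Longrightarrow> dist (w y) (w x1) < \<delta>0"
      using cont x1(1) \<delta>0 unfolding continuous_on_iff by blast
    define r where "r = min (R/2) (\<rho>/2)"
    have r: "0 < r" "r \<le> R" "r < R" "r < \<rho>" using R \<rho> by (auto simp: r_def)
    define M1 where "M1 = R / K0 * L + 2 * DIM('a)"
    have M1: "M1 \<ge> 0" using R K0 L by (simp add: M1_def)
    define \<eta> where "\<eta> = \<beta> * \<delta>0 / (M1 + 1)"
    have \<eta>: "\<eta> > 0" using \<beta> \<delta>0 M1 by (simp add: \<eta>_def)
    have \<eta>M1: "\<eta> * M1 < \<beta> * \<delta>0"
    proof -
      have "\<eta> * M1 = \<beta> * \<delta>0 * (M1 / (M1 + 1))" using M1 by (simp add: \<eta>_def field_simps)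
      also have "\<dots> < \<beta> * \<delta>0 * 1"
        by (rule mult_strict_left_mono) (use M1 \<beta> \<delta>0 in auto)
      finally show ?thesis by simp
    qed
    define q where "q = (\<lambda>z. - \<eta> * (r / K0 * \<phi> z + (z - x1) \<bullet> (z - x1)))"
    have q0: "q x1 = 0" using \<phi>0 by (simp add: q_def)
    have Cq: "C2i (ball x1 R) q" unfolding q_def by (rule P4)
    have cbr: "cball x1 r \<subseteq> ball x1 R" using r by auto
    have contq: "continuous_on (cball x1 r) q"
      using continuous_on_subset[OF C2i_cont[OF open_ball Cq] cbr] .
    define Nn where "Nn = closure \<Omega> \<inter> cball x1 r"
    have cN: "compact Nn" unfolding Nn_def using cpt by (simp add: compact_Int_closed)
    have x1N: "x1 \<in> Nn" using x1(1) r by (simp add: Nn_def)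
    have contF: "continuous_on Nn (\<lambda>z. w z + q z)"
      unfolding Nn_def by (intro continuous_intros continuous_on_subset[OF cont] continuous_on_subset[OF contq]) auto
    obtain y where y: "y \<in> Nn" "\<And>z. z \<in> Nn \<Longrightarrow> w z + q z \<le> w y + q y"
    proof -
      have "Nn \<noteq> {}" using x1N by (metis empty_iff)
      from continuous_attains_sup[OF cN this contF] show ?thesis using that by blast
    qed
    have Fy: "w y + q y \<ge> M" using y(2)[OF x1N] q0 M_def by simp
    have yc: "y \<in> closure \<Omega>" and ycb: "y \<in> cball x1 r" using y(1) by (auto simp: Nn_def)
    have wy: "w y \<le> M" using x1(2)[OF yc] M_def by simp
    have yb: "y \<in> ball x1 r"
    proof (rule ccontr)
      assume "y \<notin> ball x1 r"
      then have "dist x1 y = r" using ycb by simp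
      then have "q y \<le> - (\<eta> * r\<^sup>2 / 2)" unfolding q_def by (rule P2[OF r(1,2) \<eta>])
      moreover have "\<eta> * r\<^sup>2 / 2 > 0" using \<eta> r by simp
      ultimately show False using Fy wy by linarith
    qed
    show False
    proof (cases "y \<in> \<Omega>")
      case False
      then have fy: "y \<in> frontier \<Omega>" using closure_cases[OF \<Omega>(1) yc] by blast
      obtain r' where ldf2: "local_defining_fun \<Omega> y r' \<phi>"
        and qd: "(q has_derivative (\<lambda>h. - \<eta> * (r / K0 * (grad \<phi> y \<bullet> h) + 2 * ((y - x1) \<bullet> h)))) (at y)"
        and neg: "- \<eta> * (r / K0 * (grad \<phi> y \<bullet> grad \<phi> y) + 2 * ((y - x1) \<bullet> grad \<phi> y)) < 0"
        using P3[OF r(1,2) \<eta> fy yb] unfolding q_def by blast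
      obtain D where wD: "(w has_derivative D) (at y within closure \<Omega>)" and D0: "D (grad \<phi> y) = 0"
        using N fy ldf2 unfolding NB_def by blast
      define \<rho>' where "\<rho>' = r - dist x1 y"
      have \<rho>': "\<rho>' > 0" using yb by (simp add: \<rho>'_def)
      have mx: "\<forall>z\<in>closure \<Omega> \<inter> ball y \<rho>'. w z + q z \<le> w y + q y"
      proof
        fix z assume zz: "z \<in> closure \<Omega> \<inter> ball y \<rho>'"
        have "dist x1 z \<le> dist x1 y + dist y z" by (rule dist_triangle)
        then have "z \<in> cball x1 r" using zz by (auto simp: \<rho>'_def)
        then show "w z + q z \<le> w y + q y" using y(2) zz by (auto simp: Nn_def)
      qed
      have "0 \<le> - \<eta> * (r / K0 * (grad \<phi> y \<bullet> grad \<phi> y) + 2 * ((y - x1) \<bullet> grad \<phi> y))"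
        using bdry_max[OF \<Omega>(1) fy ldf2 wD D0 qd \<rho>' mx] by simp
      then show False using neg by simp
    next
      case True
      define U where "U = \<Omega> \<inter> ball x1 r"
      have U: "open U" "y \<in> U" using \<Omega>(1) True yb by (auto simp: U_def)
      have CU: "C2i U (\<lambda>z. w z + q z)"
        by (rule C2i_add(1)[OF U(1) C2i_mono[OF C] C2i_mono[OF Cq]]) (use r in \<open>auto simp: U_def\<close>)
      have "lap (\<lambda>z. w z + q z) y \<le> 0"
      proof (rule interior_max_lap[OF U(1,2) _ CU])
        fix z assume "z \<in> U"
        then have "z \<in> Nn" using closure_subset by (auto simp: U_def Nn_def)
        then show "w z + q z \<le> w y + q y" by (rule y(2))
      qed
      moreover have "lap (\<lambda>z. w z + q z) y = lap w y + lap q y"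
        by (rule C2i_add(2)[OF U(1) C2i_mono[OF C] C2i_mono[OF Cq] U(2)]) (use r in \<open>auto simp: U_def\<close>)
      moreover have "lap q y \<ge> - \<eta> * M1"
        unfolding q_def M1_def by (rule P5[OF r(1,2) \<eta>]) (use yb r in auto)
      ultimately have lw: "lap w y \<le> \<eta> * M1" by simp
      have "dist y x1 < \<rho>" using yb r by (simp add: dist_commute)
      then have "w y > M - \<delta>0" using \<rho>(2)[OF yc] M_def by (simp add: dist_real_def abs_less_iff)
      moreover have "\<beta> * w y \<le> K + lap w y" using eq[OF True] by simp
      moreover have "\<beta> * (M - \<delta>0) < \<beta> * w y"
        using calculation(1) \<beta> by (rule mult_strict_left_mono)
      ultimately have "\<beta> * (M - \<delta>0) < K + \<eta> * M1"
        using lw by linarith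
      then have "\<beta> * (M - \<delta>0) < K + \<beta> * \<delta>0" using \<eta>M1 by simp
      then have "\<beta> * M < K + 2 * \<beta> * \<delta>0" by (simp add: algebra_simps)
      moreover have "2 * \<beta> * \<delta>0 = \<beta> * M - K" using \<beta> by (simp add: \<delta>0_def field_simps)
      ultimately show False by simp
    qed
  qed
qed


lemma left_max_deriv:
  fixes f :: "real \<Rightarrow> real"
  assumes "(f has_real_derivative c) (at t)" "\<delta> > 0" "\<And>s. t - \<delta> < s \<Longrightarrow> s < t \<Longrightarrow> f s \<le> f t"
  shows "c \<ge> 0"
proof (rule ccontr)
  assume "\<not> c \<ge> 0" then have "c < 0" by simp
  from DERIV_neg_dec_left[OF assms(1) this] obtain d where d: "d > 0" "\<And>h. h > 0 \<Longrightarrow> h < d \<Longrightarrow> f t < f (t - h)"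
    by blast
  define h where "h = min d \<delta> / 2"
  have h: "h > 0" "h < d" "h < \<delta>" using d(1) assms(2) by (auto simp: h_def)
  have "f t < f (t - h)" using d(2) h by blast
  moreover have "f (t - h) \<le> f t" using assms(3)[of "t - h"] h by simp
  ultimately show False by simp
qed

lemma ar3: "a - b \<le> m \<Longrightarrow> b < (a - c) / 2 \<Longrightarrow> c < a \<Longrightarrow> c < (m::real)" by argo

lemma parabolic_mp:
  fixes n :: "real \<Rightarrow> 'a::euclidean_space \<Rightarrow> real"
  assumes \<Omega>: "open \<Omega>" "bounded \<Omega>" and sb: "\<forall>x\<in>frontier \<Omega>. \<exists>r \<phi>. local_defining_fun \<Omega> x r \<phi>"
    and cont: "continuous_on ({0..} \<times> closure \<Omega>) (\<lambda>(t, x). n t x)"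
    and C: "\<And>t. t > 0 \<Longrightarrow> C2i \<Omega> (n t)"
    and N: "\<And>t. t > 0 \<Longrightarrow> NB \<Omega> (n t)"
    and dn: "\<And>t x. t > 0 \<Longrightarrow> x \<in> \<Omega> \<Longrightarrow> ((\<lambda>s. n s x) has_real_derivative dt n t x) (at t)"
    and ineq: "\<And>t x. t > 0 \<Longrightarrow> x \<in> \<Omega> \<Longrightarrow> dt n t x \<le> lap (n t) x"
    and M0: "\<And>x. x \<in> closure \<Omega> \<Longrightarrow> n 0 x \<le> M0"
    and T: "T \<ge> 0" and z: "z \<in> closure \<Omega>"
  shows "n T z \<le> M0"
proof (rule ccontr)
  assume "\<not> n T z \<le> M0"
  then have nz: "n T z > M0" by simp
  define \<epsilon> where "\<epsilon> = (n T z - M0) / (2 * (T + 1))"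
  have \<epsilon>: "\<epsilon> > 0" using nz T by (simp add: \<epsilon>_def)
  have \<epsilon>T: "\<epsilon> * T < (n T z - M0) / 2"
  proof -
    have "\<epsilon> * T = (n T z - M0) / 2 * (T / (T + 1))" using T by (simp add: \<epsilon>_def field_simps)
    also have "\<dots> < (n T z - M0) / 2 * 1"
      by (rule mult_strict_left_mono) (use T nz in auto)
    finally show ?thesis by simp
  qed
  have cont': "continuous_on ({0..} \<times> closure \<Omega>) (\<lambda>p. n (fst p) (snd p))"
    using cont by (simp add: case_prod_beta')
  define G where "G = (\<lambda>p::real \<times> 'a. n (fst p) (snd p) - \<epsilon> * fst p)"
  define Q where "Q = {0..T} \<times> closure \<Omega>"
  have cptQ: "compact Q" unfolding Q_def using \<Omega>(2) by (simp add: compact_Times compact_closure)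
  have QS: "Q \<subseteq> {0..} \<times> closure \<Omega>" by (auto simp: Q_def)
  have contG: "continuous_on Q G" unfolding G_def
    by (intro continuous_intros continuous_on_subset[OF cont' QS])
  have TzQ: "(T, z) \<in> Q" using T z by (simp add: Q_def)
  obtain p1 where p1: "p1 \<in> Q" "\<And>p. p \<in> Q \<Longrightarrow> G p \<le> G p1"
  proof -
    have "Q \<noteq> {}" using TzQ by (metis empty_iff)
    from continuous_attains_sup[OF cptQ this contG] show ?thesis using that by blast
  qed
  obtain t1 x1 where p1e: "p1 = (t1, x1)" by (cases p1)
  have t1T: "0 \<le> t1" "t1 \<le> T" and x1: "x1 \<in> closure \<Omega>" using p1(1) p1e by (auto simp: Q_def)
  define MG where "MG = G (t1, x1)"
  have Gmax: "\<And>t x. t \<in> {0..T} \<Longrightarrow> x \<in> closure \<Omega> \<Longrightarrow> n t x - \<epsilon> * t \<le> MG"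
    using p1(2) p1e unfolding MG_def G_def Q_def by force
  have MG: "MG > M0"
  proof -
    have "n T z - \<epsilon> * T \<le> MG" using Gmax[of T z] T z by simp
    from ar3[OF this \<epsilon>T nz] show ?thesis .
  qed
  have MGe: "MG = n t1 x1 - \<epsilon> * t1" by (simp add: MG_def G_def)
  have t1: "t1 > 0"
  proof (rule ccontr)
    assume "\<not> t1 > 0" then have "t1 = 0" using t1T by simp
    then show False using M0[OF x1] MG MGe by simp
  qed
  show False
  proof (cases "x1 \<in> \<Omega>")
    case True
    have "\<epsilon> \<le> dt n t1 x1"
    proof -
      have "((\<lambda>s. n s x1 - \<epsilon> * s) has_real_derivative (dt n t1 x1 - \<epsilon>)) (at t1)"
        using dn[OF t1 True] by (auto intro!: derivative_eq_intros)
      then have "dt n t1 x1 - \<epsilon> \<ge> 0"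
      proof (rule left_max_deriv[OF _ t1])
        fix s assume "t1 - t1 < s" "s < t1"
        then show "n s x1 - \<epsilon> * s \<le> n t1 x1 - \<epsilon> * t1" using Gmax[of s x1] x1 t1T MGe by simp
      qed
      then show ?thesis by simp
    qed
    moreover have "lap (n t1) x1 \<le> 0"
    proof (rule interior_max_lap[OF \<Omega>(1) True _ C[OF t1]])
      fix y assume "y \<in> \<Omega>"
      then have "n t1 y - \<epsilon> * t1 \<le> MG" using Gmax[of t1 y] t1T closure_subset by auto
      then show "n t1 y \<le> n t1 x1" using MGe by simp
    qed
    ultimately show False using ineq[OF t1 True] \<epsilon> by simp
  next
    case False
    then have fx1: "x1 \<in> frontier \<Omega>" using closure_cases[OF \<Omega>(1) x1] by blast
    then obtain r0 \<phi> where ldf: "local_defining_fun \<Omega> x1 r0 \<phi>" using sb by blast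
    obtain R K0 L where R: "R > 0" and K0: "K0 > 0" and L: "L \<ge> 0" and cb: "cball x1 R \<subseteq> ball x1 r0"
      and P1: "\<And>r \<eta> y. 0 < r \<Longrightarrow> r \<le> R \<Longrightarrow> 0 < \<eta> \<Longrightarrow> y \<in> cball x1 r \<Longrightarrow>
        - \<eta> * (r / K0 * \<phi> y + (y - x1) \<bullet> (y - x1)) \<le> \<eta> * r\<^sup>2 / 2"
      and P2: "\<And>r \<eta> y. 0 < r \<Longrightarrow> r \<le> R \<Longrightarrow> 0 < \<eta> \<Longrightarrow> dist x1 y = r \<Longrightarrow>
        - \<eta> * (r / K0 * \<phi> y + (y - x1) \<bullet> (y - x1)) \<le> - (\<eta> * r\<^sup>2 / 2)"
      and P3: "\<And>r \<eta> y. 0 < r \<Longrightarrow> r \<le> R \<Longrightarrow> 0 < \<eta> \<Longrightarrow> y \<in> frontier \<Omega> \<Longrightarrow> y \<in> ball x1 r \<Longrightarrow>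
        \<exists>r'. local_defining_fun \<Omega> y r' \<phi> \<and>
          ((\<lambda>z. - \<eta> * (r / K0 * \<phi> z + (z - x1) \<bullet> (z - x1))) has_derivative
              (\<lambda>h. - \<eta> * (r / K0 * (grad \<phi> y \<bullet> h) + 2 * ((y - x1) \<bullet> h)))) (at y) \<and>
          - \<eta> * (r / K0 * (grad \<phi> y \<bullet> grad \<phi> y) + 2 * ((y - x1) \<bullet> grad \<phi> y)) < 0"
      and P4: "\<And>r \<eta>. C2i (ball x1 R) (\<lambda>z. - \<eta> * (r / K0 * \<phi> z + (z - x1) \<bullet> (z - x1)))"
      and P5: "\<And>r \<eta> y. 0 < r \<Longrightarrow> r \<le> R \<Longrightarrow> 0 < \<eta> \<Longrightarrow> y \<in> ball x1 R \<Longrightarrow>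
        lap (\<lambda>z. - \<eta> * (r / K0 * \<phi> z + (z - x1) \<bullet> (z - x1))) y \<ge> - \<eta> * (R / K0 * L + 2 * DIM('a))"
    proof -
      show thesis by (rule local_penalty[OF \<Omega>(1) fx1 ldf that])
    qed
    have \<phi>0: "\<phi> x1 = 0" by (rule ldf_zero[OF \<Omega>(1) fx1 ldf])
    define r where "r = min (R/2) (t1/2)"
    have r: "0 < r" "r \<le> R" "r < R" "r \<le> t1 / 2" using R t1 by (auto simp: r_def)
    define M1 where "M1 = R / K0 * L + 2 * DIM('a)"
    have M1: "M1 \<ge> 0" using R K0 L by (simp add: M1_def)
    define \<eta> where "\<eta> = \<epsilon> / (2 * r + M1 + 1)"
    have \<eta>: "\<eta> > 0" using \<epsilon> M1 r by (simp add: \<eta>_def)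
    have \<eta>M1: "\<eta> * (2 * r + M1) < \<epsilon>"
    proof -
      have "\<eta> * (2 * r + M1) = \<epsilon> * ((2 * r + M1) / (2 * r + M1 + 1))" using M1 r by (simp add: \<eta>_def field_simps)
      also have "\<dots> < \<epsilon> * 1"
        by (rule mult_strict_left_mono) (use M1 \<epsilon> r in auto)
      finally show ?thesis by simp
    qed
    define q where "q = (\<lambda>z. - \<eta> * (r / K0 * \<phi> z + (z - x1) \<bullet> (z - x1)))"
    have q0: "q x1 = 0" using \<phi>0 by (simp add: q_def)
    have Cq: "C2i (ball x1 R) q" unfolding q_def by (rule P4)
    have cbr: "cball x1 r \<subseteq> ball x1 R" using r by auto
    have contq: "continuous_on (cball x1 r) q"
      using continuous_on_subset[OF C2i_cont[OF open_ball Cq] cbr] .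
    define F where "F = (\<lambda>p::real \<times> 'a. n (fst p) (snd p) - \<epsilon> * fst p + q (snd p) - \<eta> * (fst p - t1)\<^sup>2)"
    define Q' where "Q' = {t1 - r..t1} \<times> (closure \<Omega> \<inter> cball x1 r)"
    have cQ': "compact Q'" unfolding Q'_def using \<Omega>(2)
      by (intro compact_Times compact_Int_closed) (auto simp: compact_closure)
    have Q'Q: "Q' \<subseteq> Q" using r t1T by (auto simp: Q'_def Q_def)
    have p1Q': "(t1, x1) \<in> Q'" using r x1 by (simp add: Q'_def)
    have contF: "continuous_on Q' F"
    proof -
      have a: "continuous_on Q' (\<lambda>p. n (fst p) (snd p))" using continuous_on_subset[OF cont'] Q'Q QS by blast
      have b: "continuous_on Q' (\<lambda>p. q (snd p))"
        by (rule continuous_on_compose2[OF contq]) (auto simp: Q'_def intro!: continuous_intros)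
      show ?thesis unfolding F_def by (intro continuous_intros a b)
    qed
    obtain p2 where p2: "p2 \<in> Q'" "\<And>p. p \<in> Q' \<Longrightarrow> F p \<le> F p2"
    proof -
      have "Q' \<noteq> {}" using p1Q' by (metis empty_iff)
      from continuous_attains_sup[OF cQ' this contF] show ?thesis using that by blast
    qed
    obtain t2 y where p2e: "p2 = (t2, y)" by (cases p2)
    have t2: "t1 - r \<le> t2" "t2 \<le> t1" and yc: "y \<in> closure \<Omega>" and ycb: "y \<in> cball x1 r"
      using p2(1) p2e by (auto simp: Q'_def)
    have Fmax: "\<And>s x. s \<in> {t1 - r..t1} \<Longrightarrow> x \<in> closure \<Omega> \<Longrightarrow> x \<in> cball x1 r \<Longrightarrow>
        n s x - \<epsilon> * s + q x - \<eta> * (s - t1)\<^sup>2 \<le> n t2 y - \<epsilon> * t2 + q y - \<eta> * (t2 - t1)\<^sup>2"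
      using p2(2) p2e unfolding F_def Q'_def by force
    have Fy: "n t2 y - \<epsilon> * t2 + q y - \<eta> * (t2 - t1)\<^sup>2 \<ge> MG"
      using Fmax[of t1 x1] r x1 q0 MGe by simp
    have Gy: "n t2 y - \<epsilon> * t2 \<le> MG" using Gmax[of t2 y] t2 r yc t1T by simp
    have sq: "\<eta> * (t2 - t1)\<^sup>2 \<ge> 0" using \<eta> by simp
    have yb: "y \<in> ball x1 r"
    proof (rule ccontr)
      assume "y \<notin> ball x1 r"
      then have "dist x1 y = r" using ycb by simp
      then have "q y \<le> - (\<eta> * r\<^sup>2 / 2)" unfolding q_def by (rule P2[OF r(1,2) \<eta>])
      moreover have "\<eta> * r\<^sup>2 / 2 > 0" using \<eta> r by simp
      ultimately show False using Fy Gy sq by linarith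
    qed
    have t2l: "t2 > t1 - r"
    proof (rule ccontr)
      assume "\<not> t2 > t1 - r" then have "t2 = t1 - r" using t2 by simp
      then have "\<eta> * (t2 - t1)\<^sup>2 = \<eta> * r\<^sup>2" by (simp add: power2_eq_square)
      moreover have "q y \<le> \<eta> * r\<^sup>2 / 2" unfolding q_def by (rule P1[OF r(1,2) \<eta> ycb])
      moreover have "\<eta> * r\<^sup>2 / 2 > 0" using \<eta> r by simp
      ultimately show False using Fy Gy by linarith
    qed
    have t2p: "t2 > 0" using t2l r by simp
    have spmax: "n t2 x + q x \<le> n t2 y + q y" if "x \<in> closure \<Omega>" "x \<in> cball x1 r" for x
      using Fmax[of t2 x] that t2 by simp
    show False
    proof (cases "y \<in> \<Omega>")
      case False
      then have fy: "y \<in> frontier \<Omega>" using closure_cases[OF \<Omega>(1) yc] by blast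
      obtain r' where ldf2: "local_defining_fun \<Omega> y r' \<phi>"
        and qd: "(q has_derivative (\<lambda>h. - \<eta> * (r / K0 * (grad \<phi> y \<bullet> h) + 2 * ((y - x1) \<bullet> h)))) (at y)"
        and neg: "- \<eta> * (r / K0 * (grad \<phi> y \<bullet> grad \<phi> y) + 2 * ((y - x1) \<bullet> grad \<phi> y)) < 0"
        using P3[OF r(1,2) \<eta> fy yb] unfolding q_def by blast
      obtain D where wD: "(n t2 has_derivative D) (at y within closure \<Omega>)" and D0: "D (grad \<phi> y) = 0"
        using N[OF t2p] fy ldf2 unfolding NB_def by blast
      define \<rho>' where "\<rho>' = r - dist x1 y"
      have \<rho>': "\<rho>' > 0" using yb by (simp add: \<rho>'_def)
      have mx: "\<forall>x\<in>closure \<Omega> \<inter> ball y \<rho>'. n t2 x + q x \<le> n t2 y + q y"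
      proof
        fix x assume xx: "x \<in> closure \<Omega> \<inter> ball y \<rho>'"
        have "dist x1 x \<le> dist x1 y + dist y x" by (rule dist_triangle)
        then have "x \<in> cball x1 r" using xx by (auto simp: \<rho>'_def)
        then show "n t2 x + q x \<le> n t2 y + q y" using spmax xx by blast
      qed
      have "0 \<le> - \<eta> * (r / K0 * (grad \<phi> y \<bullet> grad \<phi> y) + 2 * ((y - x1) \<bullet> grad \<phi> y))"
        using bdry_max[OF \<Omega>(1) fy ldf2 wD D0 qd \<rho>' mx] by simp
      then show False using neg by simp
    next
      case True
      have "\<epsilon> + 2 * \<eta> * (t2 - t1) \<le> dt n t2 y"
      proof -
        have "((\<lambda>s. n s y - \<epsilon> * s + q y - \<eta> * (s - t1)\<^sup>2) has_real_derivative
              (dt n t2 y - \<epsilon> - \<eta> * (2 * (t2 - t1)))) (at t2)"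
          using dn[OF t2p True] by (auto intro!: derivative_eq_intros)
        then have "dt n t2 y - \<epsilon> - \<eta> * (2 * (t2 - t1)) \<ge> 0"
        proof (rule left_max_deriv)
          show "t2 - (t1 - r) > 0" using t2l by simp
          fix s assume "t2 - (t2 - (t1 - r)) < s" "s < t2"
          then show "n s y - \<epsilon> * s + q y - \<eta> * (s - t1)\<^sup>2 \<le> n t2 y - \<epsilon> * t2 + q y - \<eta> * (t2 - t1)\<^sup>2"
            using Fmax[of s y] yc ycb t2 by simp
        qed
        then show ?thesis by (simp add: algebra_simps)
      qed
      moreover have "- r \<le> t2 - t1" using t2 by simp
      then have "2 * \<eta> * (- r) \<le> 2 * \<eta> * (t2 - t1)" by (rule mult_left_mono) (use \<eta> in simp)
      ultimately have dtl: "\<epsilon> - 2 * \<eta> * r \<le> dt n t2 y" by simp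
      define U where "U = \<Omega> \<inter> ball x1 r"
      have U: "open U" "y \<in> U" using \<Omega>(1) True yb by (auto simp: U_def)
      have CU1: "C2i U (n t2)" by (rule C2i_mono[OF C[OF t2p]]) (auto simp: U_def)
      have CU2: "C2i U q" by (rule C2i_mono[OF Cq]) (use r in \<open>auto simp: U_def\<close>)
      have "lap (\<lambda>x. n t2 x + q x) y \<le> 0"
      proof (rule interior_max_lap[OF U(1,2) _ C2i_add(1)[OF U(1) CU1 CU2]])
        fix x assume "x \<in> U"
        then have "x \<in> closure \<Omega>" "x \<in> cball x1 r" using closure_subset by (auto simp: U_def)
        then show "n t2 x + q x \<le> n t2 y + q y" by (rule spmax)
      qed
      moreover have "lap (\<lambda>x. n t2 x + q x) y = lap (n t2) y + lap q y"
        by (rule C2i_add(2)[OF U(1) CU1 CU2 U(2)])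
      moreover have "lap q y \<ge> - \<eta> * M1"
        unfolding q_def M1_def by (rule P5[OF r(1,2) \<eta>]) (use yb r in auto)
      ultimately have "lap (n t2) y \<le> \<eta> * M1" by simp
      then have "dt n t2 y \<le> \<eta> * M1" using ineq[OF t2p True] by simp
      with dtl have "\<epsilon> \<le> \<eta> * (2 * r + M1)" by (simp add: algebra_simps)
      then show False using \<eta>M1 by simp
    qed
  qed
qed


lemma Ck_diff: "Ck_on k U w \<Longrightarrow> 0 < k \<Longrightarrow> y \<in> U \<Longrightarrow> w differentiable (at y)"
proof -
  assume a: "Ck_on k U w" "0 < k" "y \<in> U"
  then have "\<forall>x\<in>U. pds [] w differentiable (at x)" unfolding Ck_on_def by (erule_tac x="[]" in allE) simp
  then show ?thesis using a(3) by simp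
qed

lemma Ck2_C2i: "Ck_on 2 U w \<Longrightarrow> C2i U w"
proof -
  assume a: "Ck_on 2 U w"
  have "pd i w differentiable (at y)" if "i \<in> Basis" "y \<in> U" for i y
  proof -
    have "\<forall>x\<in>U. pds [i] w differentiable (at x)" using a that(1) unfolding Ck_on_def by (erule_tac x="[i]" in allE) simp
    then show ?thesis using that(2) by simp
  qed
  then show ?thesis unfolding C2i_def using Ck_diff[OF a] by auto
qed

lemma C2C1_C2i: "C2_C1bar \<Omega> w \<Longrightarrow> C2i \<Omega> w"
  unfolding C2_C1bar_def using Ck2_C2i by blast

lemma C2C1_cont: "C2_C1bar \<Omega> w \<Longrightarrow> continuous_on (closure \<Omega>) w"
  unfolding C2_C1bar_def C1_upto_def
  by (meson differentiable_imp_continuous_on differentiable_on_def)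

lemma NB_of:
  assumes "C2_C1bar \<Omega> w" "neumann_bc \<Omega> w" shows "NB \<Omega> w"
  unfolding NB_def
proof (intro ballI allI impI)
  fix x r \<phi> assume x: "x \<in> frontier \<Omega>" and l: "local_defining_fun \<Omega> x r \<phi>"
  have xc: "x \<in> closure \<Omega>" using x by (simp add: frontier_def)
  have "w differentiable (at x within closure \<Omega>)" using assms(1) xc unfolding C2_C1bar_def C1_upto_def by blast
  then have "(w has_derivative frechet_derivative w (at x within closure \<Omega>)) (at x within closure \<Omega>)"
    using frechet_derivative_works by blast
  moreover have "frechet_derivative w (at x within closure \<Omega>) (grad \<phi> x) = 0"
    using assms(2) x l unfolding neumann_bc_def by blast
  ultimately show "\<exists>D. (w has_derivative D) (at x within closure \<Omega>) \<and> D (grad \<phi> x) = 0" by blast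
qed

lemma NB_add: "NB \<Omega> f \<Longrightarrow> NB \<Omega> g \<Longrightarrow> NB \<Omega> (\<lambda>y. f y + g y)"
  unfolding NB_def
proof (intro ballI allI impI)
  fix x r \<phi>
  assume f: "\<forall>x\<in>frontier \<Omega>. \<forall>r \<phi>. local_defining_fun \<Omega> x r \<phi> \<longrightarrow> (\<exists>D. (f has_derivative D) (at x within closure \<Omega>) \<and> D (grad \<phi> x) = 0)"
    and g: "\<forall>x\<in>frontier \<Omega>. \<forall>r \<phi>. local_defining_fun \<Omega> x r \<phi> \<longrightarrow> (\<exists>D. (g has_derivative D) (at x within closure \<Omega>) \<and> D (grad \<phi> x) = 0)"
    and x: "x \<in> frontier \<Omega>" and l: "local_defining_fun \<Omega> x r \<phi>"
  obtain D1 where D1: "(f has_derivative D1) (at x within closure \<Omega>)" "D1 (grad \<phi> x) = 0" using f x l by blast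
  obtain D2 where D2: "(g has_derivative D2) (at x within closure \<Omega>)" "D2 (grad \<phi> x) = 0" using g x l by blast
  show "\<exists>D. ((\<lambda>y. f y + g y) has_derivative D) (at x within closure \<Omega>) \<and> D (grad \<phi> x) = 0"
    using has_derivative_add[OF D1(1) D2(1)] D1(2) D2(2) by auto
qed

lemma NB_scale: "NB \<Omega> f \<Longrightarrow> NB \<Omega> (\<lambda>y. c * f y)"
  unfolding NB_def
proof (intro ballI allI impI)
  fix x r \<phi>
  assume f: "\<forall>x\<in>frontier \<Omega>. \<forall>r \<phi>. local_defining_fun \<Omega> x r \<phi> \<longrightarrow> (\<exists>D. (f has_derivative D) (at x within closure \<Omega>) \<and> D (grad \<phi> x) = 0)"
    and x: "x \<in> frontier \<Omega>" and l: "local_defining_fun \<Omega> x r \<phi>"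
  obtain D1 where D1: "(f has_derivative D1) (at x within closure \<Omega>)" "D1 (grad \<phi> x) = 0" using f x l by blast
  show "\<exists>D. ((\<lambda>y. c * f y) has_derivative D) (at x within closure \<Omega>) \<and> D (grad \<phi> x) = 0"
    using has_derivative_mult_right[OF D1(1), of c] D1(2) by auto
qed

lemma NB_diff: "NB \<Omega> f \<Longrightarrow> NB \<Omega> g \<Longrightarrow> NB \<Omega> (\<lambda>y. f y - g y)"
  using NB_add[OF _ NB_scale[of \<Omega> g "-1"], of f] by simp

lemma NB_const: "NB \<Omega> (\<lambda>y. c)"
  unfolding NB_def by (auto intro!: exI[of _ "\<lambda>h. 0"])

lemma A1_deriv: "assumption_A1 \<gamma> \<Longrightarrow> s > 0 \<Longrightarrow> (\<gamma> has_real_derivative deriv \<gamma> s) (at s)"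
  unfolding assumption_A1_def using Ck_diff[of 3 "{0<..}" \<gamma> s]
  by (simp add: DERIV_deriv_iff_real_differentiable)

lemma A1_cont: "assumption_A1 \<gamma> \<Longrightarrow> continuous_on {0<..} \<gamma>"
  using A1_deriv by (meson DERIV_isCont continuous_at_imp_continuous_on greaterThan_iff)

lemma A1_mono: "assumption_A1 \<gamma> \<Longrightarrow> 0 < a \<Longrightarrow> a \<le> b \<Longrightarrow> \<gamma> b \<le> \<gamma> a"
proof -
  assume a: "assumption_A1 \<gamma>" "0 < a" "a \<le> b"
  show ?thesis
  proof (rule DERIV_nonpos_imp_nonincreasing[OF a(3)])
    fix x assume "a \<le> x" "x \<le> b"
    then have "x > 0" using a by simp
    then show "\<exists>y. DERIV \<gamma> x :> y \<and> y \<le> 0" using A1_deriv[OF a(1)] a(1) unfolding assumption_A1_def by blast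
  qed
qed

lemma A1_pos: "assumption_A1 \<gamma> \<Longrightarrow> s > 0 \<Longrightarrow> \<gamma> s > 0"
  unfolding assumption_A1_def by blast

lemma A1_dneg: "assumption_A1 \<gamma> \<Longrightarrow> s > 0 \<Longrightarrow> deriv \<gamma> s \<le> 0"
  unfolding assumption_A1_def by blast

lemma Gamma_deriv:
  assumes A: "assumption_A1 \<gamma>" and s: "s > 0"
  shows "(Gamma_fun \<gamma> has_real_derivative \<gamma> s) (at s)"
proof -
  define a where "a = min 1 s / 2"
  define b where "b = max 1 s + 1"
  have ab: "0 < a" "a < s" "s < b" "a \<le> 1" "1 \<le> b" using s by (auto simp: a_def b_def)
  have cont: "continuous_on {a..b} \<gamma>"
    by (rule continuous_on_subset[OF A1_cont[OF A]]) (use ab in auto)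
  have "((\<lambda>x. interval_lebesgue_integral lborel (ereal 1) (ereal x) \<gamma>) has_vector_derivative \<gamma> s) (at s within {a..b})"
    by (rule interval_integral_FTC2[OF ab(4,5) cont]) (use ab in auto)
  moreover have "at s within {a..b} = at s"
    by (rule at_within_interior) (use ab in auto)
  ultimately have "((\<lambda>x. interval_lebesgue_integral lborel (ereal 1) (ereal x) \<gamma>) has_vector_derivative \<gamma> s) (at s)"
    by simp
  then have "((\<lambda>x. interval_lebesgue_integral lborel (ereal 1) (ereal x) \<gamma>) has_real_derivative \<gamma> s) (at s)"
    by (simp add: has_real_derivative_iff_has_vector_derivative)
  moreover have "Gamma_fun \<gamma> = (\<lambda>x. interval_lebesgue_integral lborel (ereal 1) (ereal x) \<gamma>)"
    unfolding Gamma_fun_def one_ereal_def by (rule refl)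
  ultimately show ?thesis by simp
qed

lemma Gamma_mono:
  assumes A: "assumption_A1 \<gamma>" and "0 < a" "a \<le> b"
  shows "Gamma_fun \<gamma> a \<le> Gamma_fun \<gamma> b"
proof (rule DERIV_nonneg_imp_nondecreasing[OF assms(3)])
  fix x assume "a \<le> x" "x \<le> b"
  then have x: "x > 0" using assms by simp
  show "\<exists>y. DERIV (Gamma_fun \<gamma>) x :> y \<and> y \<ge> 0"
    using Gamma_deriv[OF A x] A1_pos[OF A x] by (auto intro!: exI[of _ "\<gamma> x"])
qed

lemma H_mono:
  assumes A: "assumption_A1 \<gamma>" and "0 < a" "a \<le> b"
  shows "Gamma_fun \<gamma> a - a * \<gamma> a \<le> Gamma_fun \<gamma> b - b * \<gamma> b"
proof (rule DERIV_nonneg_imp_nondecreasing[OF assms(3)])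
  fix x assume "a \<le> x" "x \<le> b"
  then have x: "x > 0" using assms by simp
  have "((\<lambda>x. Gamma_fun \<gamma> x - x * \<gamma> x) has_real_derivative (\<gamma> x - (1 * \<gamma> x + x * deriv \<gamma> x))) (at x)"
    using DERIV_diff[OF Gamma_deriv[OF A x] DERIV_mult[OF DERIV_ident A1_deriv[OF A x]]] by (simp add: mult.commute)
  moreover have "\<gamma> x - (1 * \<gamma> x + x * deriv \<gamma> x) \<ge> 0"
    using A1_dneg[OF A x] x by (simp add: mult_nonneg_nonpos)
  ultimately show "\<exists>y. DERIV (\<lambda>x. Gamma_fun \<gamma> x - x * \<gamma> x) x :> y \<and> y \<ge> 0" by blast
qed

lemma gamma_star_eq:
  assumes A: "assumption_A1 \<gamma>" and v: "vstar > 0"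
  shows "gamma_star \<gamma> vstar = \<gamma> vstar"
  unfolding gamma_star_def
  by (rule cSup_eq_maximum) (use A1_mono[OF A v] in auto)

lemma comp_C2i:
  fixes w :: "'a::euclidean_space \<Rightarrow> real"
  assumes U: "open U" and C: "C2i U w"
    and G: "\<And>y. y \<in> U \<Longrightarrow> (G has_real_derivative g (w y)) (at (w y))"
    and g: "\<And>y. y \<in> U \<Longrightarrow> (g has_real_derivative g1 (w y)) (at (w y))"
  shows "C2i U (\<lambda>y. G (w y))"
    "\<And>y. y \<in> U \<Longrightarrow> lap (\<lambda>y. G (w y)) y = g1 (w y) * (\<Sum>i\<in>Basis. (pd i w y)\<^sup>2) + g (w y) * lap w y"
proof -
  have wd: "\<And>y. y \<in> U \<Longrightarrow> w differentiable (at y)" and w1d: "\<And>i y. i \<in> Basis \<Longrightarrow> y \<in> U \<Longrightarrow> pd i w differentiable (at y)"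
    using C unfolding C2i_def by auto
  have chain: "((\<lambda>y. F (w y)) has_derivative (\<lambda>h. c * (grad w y \<bullet> h))) (at y)"
    if "y \<in> U" "(F has_real_derivative c) (at (w y))" for F c y
  proof -
    have e: "(*) c = (\<lambda>x. x * c)" by (auto simp: fun_eq_iff)
    have "(F has_derivative (*) c) (at (w y))" using that(2) has_field_derivative_def by blast
    then have "(F has_derivative (\<lambda>x. x * c)) (at (w y))" by (simp only: e)
    then have F': "(F has_derivative (\<lambda>x. x * c)) (at (w y) within range w)"
      by (rule has_derivative_at_withinI)
    have "((\<lambda>y. F (w y)) has_derivative (\<lambda>h. (grad w y \<bullet> h) * c)) (at y)"
      using has_derivative_in_compose[OF hd_grad[OF wd[OF that(1)]] F'] by simp
    then show ?thesis by (simp add: mult.commute)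
  qed
  have Gd: "((\<lambda>y. G (w y)) has_derivative (\<lambda>h. g (w y) * (grad w y \<bullet> h))) (at y)" if "y \<in> U" for y
    by (rule chain[OF that G[OF that]])
  have gd: "((\<lambda>y. g (w y)) has_derivative (\<lambda>h. g1 (w y) * (grad w y \<bullet> h))) (at y)" if "y \<in> U" for y
    by (rule chain[OF that g[OF that]])
  have pdG: "pd i (\<lambda>y. G (w y)) y = g (w y) * pd i w y" if "y \<in> U" for i y
    using pd_from_hd[OF Gd[OF that]] fd_grad[OF wd[OF that], of i] by (simp add: pd_def)
  have pd1: "((\<lambda>y. g (w y) * pd i w y) has_derivative
      (\<lambda>h. g (w y) * (grad (pd i w) y \<bullet> h) + g1 (w y) * (grad w y \<bullet> h) * pd i w y)) (at y)"
    if "y \<in> U" "i \<in> Basis" for i y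
    using has_derivative_mult[OF gd[OF that(1)] hd_grad[OF w1d[OF that(2,1)]]] by simp
  have dG: "(\<lambda>y. G (w y)) differentiable (at y)" if "y \<in> U" for y
    using Gd[OF that] differentiable_def by blast
  have d1: "pd i (\<lambda>y. G (w y)) differentiable (at y)" if "y \<in> U" "i \<in> Basis" for i y
  proof -
    have h: "(\<lambda>y. g (w y) * pd i w y) differentiable (at y)" using pd1[OF that] differentiable_def by blast
    have e: "\<And>z. z \<in> U \<Longrightarrow> g (w z) * pd i w z = pd i (\<lambda>y. G (w y)) z" using pdG by simp
    show ?thesis by (rule differentiable_cong_open[OF U that(1) e h])
  qed
  show "C2i U (\<lambda>y. G (w y))" unfolding C2i_def using dG d1 by blast
  fix y assume y: "y \<in> U"
  have "pd i (pd i (\<lambda>y. G (w y))) y = g1 (w y) * (pd i w y)\<^sup>2 + g (w y) * pd i (pd i w) y" if i: "i \<in> Basis" for i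
  proof -
    have "pd i (pd i (\<lambda>y. G (w y))) y = pd i (\<lambda>y. g (w y) * pd i w y) y"
      by (rule pd_cong_open[OF U y]) (simp add: pdG)
    also have "\<dots> = g (w y) * (grad (pd i w) y \<bullet> i) + g1 (w y) * (grad w y \<bullet> i) * pd i w y"
      by (rule pd_from_hd[OF pd1[OF y i]])
    also have "grad (pd i w) y \<bullet> i = pd i (pd i w) y" using fd_grad[OF w1d[OF i y], of i] by (simp add: pd_def)
    also have "grad w y \<bullet> i = pd i w y" using fd_grad[OF wd[OF y], of i] by (simp add: pd_def)
    finally show ?thesis by (simp add: power2_eq_square algebra_simps)
  qed
  then show "lap (\<lambda>y. G (w y)) y = g1 (w y) * (\<Sum>i\<in>Basis. (pd i w y)\<^sup>2) + g (w y) * lap w y"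
    unfolding lap_def by (simp add: sum.distrib sum_distrib_left)
qed


lemma quotient_limit:
  fixes S U :: "real \<Rightarrow> 'a::euclidean_space \<Rightarrow> real" and V Z :: "'a \<Rightarrow> real"
  assumes \<Omega>: "open \<Omega>" "bounded \<Omega>" and sb: "\<forall>x\<in>frontier \<Omega>. \<exists>r \<phi>. local_defining_fun \<Omega> x r \<phi>"
    and \<beta>: "\<beta> > 0" and t: "t > 0"
    and Sreg: "\<And>s. s \<ge> 0 \<Longrightarrow> C2i \<Omega> (S s) \<and> continuous_on (closure \<Omega>) (S s) \<and> NB \<Omega> (S s)"
    and Seq: "\<And>s y. s \<ge> 0 \<Longrightarrow> y \<in> \<Omega> \<Longrightarrow> - lap (S s) y + \<beta> * S s y = U s y"
    and Uconv: "\<And>\<epsilon>. \<epsilon> > 0 \<Longrightarrow> \<exists>\<delta>>0. \<forall>h. h \<noteq> 0 \<longrightarrow> \<bar>h\<bar> < \<delta> \<longrightarrow> (\<forall>y\<in>\<Omega>. \<bar>(U (t + h) y - U t y) / h - V y\<bar> \<le> \<epsilon>)"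
    and Zreg: "C2i \<Omega> Z" "continuous_on (closure \<Omega>) Z" "NB \<Omega> Z"
    and Zeq: "\<And>y. y \<in> \<Omega> \<Longrightarrow> - lap Z y + \<beta> * Z y + V y \<le> Kz"
    and x: "x \<in> \<Omega>"
  shows "\<exists>D. ((\<lambda>s. S s x) has_real_derivative D) (at t) \<and> D + Z x \<le> Kz / \<beta>"
proof -
  define Dq where "Dq = (\<lambda>h y. (1 / h) * (S (t + h) y - S t y))"
  have xc: "x \<in> closure \<Omega>" using x closure_subset by blast
  have DqR: "C2i \<Omega> (Dq h) \<and> continuous_on (closure \<Omega>) (Dq h) \<and> NB \<Omega> (Dq h) \<and>
      (\<forall>y\<in>\<Omega>. - lap (Dq h) y + \<beta> * Dq h y = (U (t + h) y - U t y) / h)"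
    if h: "h \<noteq> 0" "\<bar>h\<bar> < t" for h
  proof -
    have th: "t + h \<ge> 0" using h t by linarith
    have R1: "C2i \<Omega> (S (t + h))" "continuous_on (closure \<Omega>) (S (t + h))" "NB \<Omega> (S (t + h))"
      using Sreg[OF th] by auto
    have R0: "C2i \<Omega> (S t)" "continuous_on (closure \<Omega>) (S t)" "NB \<Omega> (S t)"
      using Sreg[of t] t by auto
    have Cd: "C2i \<Omega> (\<lambda>y. S (t + h) y - S t y)" by (rule C2i_diff(1)[OF \<Omega>(1) R1(1) R0(1)])
    have C: "C2i \<Omega> (Dq h)" unfolding Dq_def by (rule C2i_scale(1)[OF \<Omega>(1) Cd])
    have cont: "continuous_on (closure \<Omega>) (Dq h)" unfolding Dq_def
      by (intro continuous_intros R1(2) R0(2))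
    have N: "NB \<Omega> (Dq h)" unfolding Dq_def by (rule NB_scale[OF NB_diff[OF R1(3) R0(3)]])
    have eq: "- lap (Dq h) y + \<beta> * Dq h y = (U (t + h) y - U t y) / h" if y: "y \<in> \<Omega>" for y
    proof -
      have l1: "lap (\<lambda>y. (1 / h) * (S (t + h) y - S t y)) y = (1 / h) * lap (\<lambda>y. S (t + h) y - S t y) y"
        by (rule C2i_scale(2)[OF \<Omega>(1) Cd y])
      have "lap (Dq h) y = (1 / h) * (lap (S (t + h)) y - lap (S t) y)"
        unfolding Dq_def l1 C2i_diff(2)[OF \<Omega>(1) R1(1) R0(1) y] ..
      then have "- lap (Dq h) y + \<beta> * Dq h y = (1 / h) * ((- lap (S (t + h)) y + \<beta> * S (t + h) y) - (- lap (S t) y + \<beta> * S t y))"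
        unfolding Dq_def by (simp add: algebra_simps)
      also have "\<dots> = (U (t + h) y - U t y) / h" using Seq[OF th y] Seq[of t y] t y by simp
      finally show ?thesis .
    qed
    show ?thesis using C cont N eq by blast
  qed
  have est: "\<exists>\<delta>>0. (\<forall>h k. h \<noteq> 0 \<longrightarrow> k \<noteq> 0 \<longrightarrow> \<bar>h\<bar> < \<delta> \<longrightarrow> \<bar>k\<bar> < \<delta> \<longrightarrow> \<bar>Dq h x - Dq k x\<bar> \<le> 2 * \<epsilon> / \<beta>)
      \<and> (\<forall>h. h \<noteq> 0 \<longrightarrow> \<bar>h\<bar> < \<delta> \<longrightarrow> Dq h x + Z x \<le> (\<epsilon> + Kz) / \<beta>)" if \<epsilon>: "\<epsilon> > 0" for \<epsilon>
  proof -
    obtain \<delta>1 where \<delta>1: "\<delta>1 > 0" "\<And>h y. h \<noteq> 0 \<Longrightarrow> \<bar>h\<bar> < \<delta>1 \<Longrightarrow> y \<in> \<Omega> \<Longrightarrow> \<bar>(U (t + h) y - U t y) / h - V y\<bar> \<le> \<epsilon>"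
      using Uconv[OF \<epsilon>] by blast
    define \<delta> where "\<delta> = min \<delta>1 t"
    have \<delta>: "\<delta> > 0" using \<delta>1 t by (simp add: \<delta>_def)
    have P1: "Dq h x - Dq k x \<le> 2 * \<epsilon> / \<beta>" if hk: "h \<noteq> 0" "k \<noteq> 0" "\<bar>h\<bar> < \<delta>" "\<bar>k\<bar> < \<delta>" for h k
    proof -
      have ht: "\<bar>h\<bar> < t" "\<bar>k\<bar> < t" using hk by (auto simp: \<delta>_def)
      note Rh = DqR[OF hk(1) ht(1)] and Rk = DqR[OF hk(2) ht(2)]
      have C: "C2i \<Omega> (\<lambda>y. Dq h y - Dq k y)" using C2i_diff(1)[OF \<Omega>(1)] Rh Rk by blast
      have cont: "continuous_on (closure \<Omega>) (\<lambda>y. Dq h y - Dq k y)"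
        using Rh Rk by (intro continuous_intros) auto
      have N: "NB \<Omega> (\<lambda>y. Dq h y - Dq k y)" using NB_diff Rh Rk by blast
      have eq: "- lap (\<lambda>y. Dq h y - Dq k y) y + \<beta> * (Dq h y - Dq k y) \<le> 2 * \<epsilon>" if y: "y \<in> \<Omega>" for y
      proof -
        have "lap (\<lambda>y. Dq h y - Dq k y) y = lap (Dq h) y - lap (Dq k) y"
          using C2i_diff(2)[OF \<Omega>(1) _ _ y] Rh Rk by blast
        then have "- lap (\<lambda>y. Dq h y - Dq k y) y + \<beta> * (Dq h y - Dq k y)
            = (- lap (Dq h) y + \<beta> * Dq h y) - (- lap (Dq k) y + \<beta> * Dq k y)" by (simp add: algebra_simps)
        also have "\<dots> = (U (t + h) y - U t y) / h - (U (t + k) y - U t y) / k" using Rh Rk y by simp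
        also have "\<dots> \<le> 2 * \<epsilon>"
          using \<delta>1(2)[OF hk(1) _ y] \<delta>1(2)[OF hk(2) _ y] hk(3,4) by (auto simp: \<delta>_def abs_le_iff)
        finally show ?thesis .
      qed
      show ?thesis using max_principle[OF \<Omega> sb \<beta> C cont N eq xc] by simp
    qed
    have P2: "Dq h x + Z x \<le> (\<epsilon> + Kz) / \<beta>" if hk: "h \<noteq> 0" "\<bar>h\<bar> < \<delta>" for h
    proof -
      have ht: "\<bar>h\<bar> < t" using hk by (auto simp: \<delta>_def)
      note Rh = DqR[OF hk(1) ht(1)]
      have C: "C2i \<Omega> (\<lambda>y. Dq h y + Z y)" using C2i_add(1)[OF \<Omega>(1)] Rh Zreg(1) by blast
      have cont: "continuous_on (closure \<Omega>) (\<lambda>y. Dq h y + Z y)"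
        using Rh Zreg(2) by (intro continuous_intros) auto
      have N: "NB \<Omega> (\<lambda>y. Dq h y + Z y)" using NB_add Rh Zreg(3) by blast
      have eq: "- lap (\<lambda>y. Dq h y + Z y) y + \<beta> * (Dq h y + Z y) \<le> \<epsilon> + Kz" if y: "y \<in> \<Omega>" for y
      proof -
        have "lap (\<lambda>y. Dq h y + Z y) y = lap (Dq h) y + lap Z y"
          using C2i_add(2)[OF \<Omega>(1) _ _ y] Rh Zreg(1) by blast
        then have "- lap (\<lambda>y. Dq h y + Z y) y + \<beta> * (Dq h y + Z y)
            = (- lap (Dq h) y + \<beta> * Dq h y) + (- lap Z y + \<beta> * Z y)" by (simp add: algebra_simps)
        also have "\<dots> = ((U (t + h) y - U t y) / h - V y) + (- lap Z y + \<beta> * Z y + V y)" using Rh y by simp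
        also have "\<dots> \<le> \<epsilon> + Kz"
          using \<delta>1(2)[OF hk(1) _ y] hk(2) Zeq[OF y] by (auto simp: \<delta>_def abs_le_iff)
        finally show ?thesis .
      qed
      show ?thesis using max_principle[OF \<Omega> sb \<beta> C cont N eq xc] by simp
    qed
    have "\<bar>Dq h x - Dq k x\<bar> \<le> 2 * \<epsilon> / \<beta>" if "h \<noteq> 0" "k \<noteq> 0" "\<bar>h\<bar> < \<delta>" "\<bar>k\<bar> < \<delta>" for h k
      using P1[OF that] P1[OF that(2,1,4,3)] by (simp add: abs_le_iff)
    then show ?thesis using \<delta> P2 by blast
  qed
  define a where "a = (\<lambda>m::nat. Dq (t / (real m + 2)) x)"
  have hpos: "t / (real m + 2) > 0" for m using t by simp
  have hsmall: "\<exists>M. \<forall>m\<ge>M. t / (real m + 2) < \<delta>" if "\<delta> > 0" for \<delta>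
  proof -
    obtain M :: nat where M: "real M > t / \<delta>" using reals_Archimedean2 by blast
    have "t / (real m + 2) < \<delta>" if "m \<ge> M" for m
    proof -
      have "t / \<delta> < real m + 2" using M that by linarith
      then have "t < \<delta> * (real m + 2)" using \<open>\<delta> > 0\<close> by (simp add: divide_less_eq mult.commute)
      then show ?thesis by (simp add: divide_less_eq mult.commute)
    qed
    then show ?thesis by blast
  qed
  have "Cauchy a"
  proof (rule metric_CauchyI)
    fix e :: real assume e: "e > 0"
    obtain \<delta> where \<delta>: "\<delta> > 0" "\<And>h k. h \<noteq> 0 \<Longrightarrow> k \<noteq> 0 \<Longrightarrow> \<bar>h\<bar> < \<delta> \<Longrightarrow> \<bar>k\<bar> < \<delta> \<Longrightarrow> \<bar>Dq h x - Dq k x\<bar> \<le> 2 * (e * \<beta> / 4) / \<beta>"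
      using est[of "e * \<beta> / 4"] e \<beta> by auto
    obtain M where M: "\<And>m. m \<ge> M \<Longrightarrow> t / (real m + 2) < \<delta>" using hsmall[OF \<delta>(1)] by blast
    have "dist (a m) (a n) < e" if "m \<ge> M" "n \<ge> M" for m n
    proof -
      have "\<bar>a m - a n\<bar> \<le> 2 * (e * \<beta> / 4) / \<beta>"
        unfolding a_def using \<delta>(2) M[OF that(1)] M[OF that(2)] hpos by (metis abs_of_pos less_irrefl)
      also have "\<dots> = e / 2" using \<beta> by simp
      finally show ?thesis using e by (simp add: dist_real_def)
    qed
    then show "\<exists>M. \<forall>m\<ge>M. \<forall>n\<ge>M. dist (a m) (a n) < e" by blast
  qed
  then obtain D where aD: "a \<longlonglongrightarrow> D" using Cauchy_convergent_iff convergent_def by blast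
  have near: "\<exists>\<delta>>0. (\<forall>h. h \<noteq> 0 \<longrightarrow> \<bar>h\<bar> < \<delta> \<longrightarrow> \<bar>Dq h x - D\<bar> \<le> 2 * \<epsilon> / \<beta>)
      \<and> (\<forall>h. h \<noteq> 0 \<longrightarrow> \<bar>h\<bar> < \<delta> \<longrightarrow> Dq h x + Z x \<le> (\<epsilon> + Kz) / \<beta>)" if \<epsilon>: "\<epsilon> > 0" for \<epsilon>
  proof -
    obtain \<delta> where \<delta>: "\<delta> > 0" "\<And>h k. h \<noteq> 0 \<Longrightarrow> k \<noteq> 0 \<Longrightarrow> \<bar>h\<bar> < \<delta> \<Longrightarrow> \<bar>k\<bar> < \<delta> \<Longrightarrow> \<bar>Dq h x - Dq k x\<bar> \<le> 2 * \<epsilon> / \<beta>"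
      and P2: "\<And>h. h \<noteq> 0 \<Longrightarrow> \<bar>h\<bar> < \<delta> \<Longrightarrow> Dq h x + Z x \<le> (\<epsilon> + Kz) / \<beta>"
      using est[OF \<epsilon>] by blast
    obtain M where M: "\<And>m. m \<ge> M \<Longrightarrow> t / (real m + 2) < \<delta>" using hsmall[OF \<delta>(1)] by blast
    have "\<bar>Dq h x - D\<bar> \<le> 2 * \<epsilon> / \<beta>" if h: "h \<noteq> 0" "\<bar>h\<bar> < \<delta>" for h
    proof -
      have lim: "(\<lambda>m. \<bar>Dq h x - a m\<bar>) \<longlonglongrightarrow> \<bar>Dq h x - D\<bar>"
        by (intro tendsto_intros aD)
      have ev: "eventually (\<lambda>m. \<bar>Dq h x - a m\<bar> \<le> 2 * \<epsilon> / \<beta>) sequentially"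
      proof (rule eventually_sequentiallyI[of M])
        fix m assume "m \<ge> M"
        then show "\<bar>Dq h x - a m\<bar> \<le> 2 * \<epsilon> / \<beta>"
          unfolding a_def using \<delta>(2)[OF h(1) _ h(2)] M hpos by (metis abs_of_pos less_irrefl)
      qed
      show ?thesis by (rule tendsto_upperbound[OF lim ev]) simp
    qed
    then show ?thesis using \<delta>(1) P2 by blast
  qed
  have deriv: "((\<lambda>s. S s x) has_real_derivative D) (at t)"
    unfolding DERIV_def LIM_eq
  proof (intro allI impI)
    fix r :: real assume r: "r > 0"
    obtain \<delta> where \<delta>: "\<delta> > 0" "\<And>h. h \<noteq> 0 \<Longrightarrow> \<bar>h\<bar> < \<delta> \<Longrightarrow> \<bar>Dq h x - D\<bar> \<le> 2 * (r * \<beta> / 4) / \<beta>"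
      using near[of "r * \<beta> / 4"] r \<beta> by auto
    have "norm ((S (t + h) x - S t x) / h - D) < r" if "h \<noteq> 0 \<and> norm (h - 0) < \<delta>" for h
    proof -
      have "\<bar>Dq h x - D\<bar> \<le> r / 2" using \<delta>(2)[of h] that \<beta> by simp
      moreover have "Dq h x = (S (t + h) x - S t x) / h" by (simp add: Dq_def)
      ultimately show ?thesis using r by simp
    qed
    then show "\<exists>s>0. \<forall>h. h \<noteq> 0 \<and> norm (h - 0) < s \<longrightarrow> norm ((S (t + h) x - S t x) / h - D) < r"
      using \<delta>(1) by blast
  qed
  have bound: "D + Z x \<le> Kz / \<beta>"
  proof (rule field_le_epsilon)
    fix e :: real assume e: "e > 0"
    obtain \<delta> where \<delta>: "\<delta> > 0" "\<And>h. h \<noteq> 0 \<Longrightarrow> \<bar>h\<bar> < \<delta> \<Longrightarrow> \<bar>Dq h x - D\<bar> \<le> 2 * (e * \<beta> / 4) / \<beta>"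
      "\<And>h. h \<noteq> 0 \<Longrightarrow> \<bar>h\<bar> < \<delta> \<Longrightarrow> Dq h x + Z x \<le> (e * \<beta> / 4 + Kz) / \<beta>"
      using near[of "e * \<beta> / 4"] e \<beta> by auto
    define h where "h = \<delta> / 2"
    have h: "h \<noteq> 0" "\<bar>h\<bar> < \<delta>" using \<delta>(1) by (auto simp: h_def)
    have "\<bar>Dq h x - D\<bar> \<le> e / 2" using \<delta>(2)[OF h] \<beta> by simp
    then have a1: "D \<le> Dq h x + e / 2" unfolding abs_le_iff by linarith
    have a2: "Dq h x + Z x \<le> e / 4 + Kz / \<beta>" using \<delta>(3)[OF h] \<beta> by (simp add: add_divide_distrib)
    show "D + Z x \<le> Kz / \<beta> + e" using a1 a2 e by linarith
  qed
  show ?thesis using deriv bound by blast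
qed


lemma NB_comp:
  assumes N: "NB \<Omega> w" and G: "\<And>x. x \<in> frontier \<Omega> \<Longrightarrow> (G has_real_derivative g x) (at (w x))"
  shows "NB \<Omega> (\<lambda>y. G (w y))"
  unfolding NB_def
proof (intro ballI allI impI)
  fix x r \<phi> assume x: "x \<in> frontier \<Omega>" and l: "local_defining_fun \<Omega> x r \<phi>"
  obtain D where D: "(w has_derivative D) (at x within closure \<Omega>)" "D (grad \<phi> x) = 0"
    using N x l unfolding NB_def by blast
  have e: "(*) (g x) = (\<lambda>z. z * g x)" by (auto simp: fun_eq_iff)
  have "(G has_derivative (*) (g x)) (at (w x))" using G[OF x] has_field_derivative_def by blast
  then have "(G has_derivative (\<lambda>z. z * g x)) (at (w x))" by (simp only: e)
  then have G': "(G has_derivative (\<lambda>z. z * g x)) (at (w x) within w ` closure \<Omega>)"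
    by (rule has_derivative_at_withinI)
  have "((\<lambda>y. G (w y)) has_derivative (\<lambda>h. D h * g x)) (at x within closure \<Omega>)"
    by (rule has_derivative_in_compose[OF D(1) G'])
  then show "\<exists>D. ((\<lambda>y. G (w y)) has_derivative D) (at x within closure \<Omega>) \<and> D (grad \<phi> x) = 0"
    using D(2) by auto
qed

lemma time_quot_unif:
  fixes W Wd :: "real \<Rightarrow> 'a::euclidean_space \<Rightarrow> real"
  assumes cpt: "compact K" and t: "t > 0"
    and Wder: "\<And>s y. s > 0 \<Longrightarrow> y \<in> K \<Longrightarrow> ((\<lambda>s. W s y) has_real_derivative Wd s y) (at s)"
    and Wcont: "continuous_on ({0<..} \<times> K) (\<lambda>(s, y). Wd s y)"
    and \<epsilon>: "\<epsilon> > 0"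
  shows "\<exists>\<delta>>0. \<forall>h. h \<noteq> 0 \<longrightarrow> \<bar>h\<bar> < \<delta> \<longrightarrow> (\<forall>y\<in>K. \<bar>(W (t + h) y - W t y) / h - Wd t y\<bar> \<le> \<epsilon>)"
proof -
  define KK where "KK = {t/2..3*t/2} \<times> K"
  have cKK: "compact KK" unfolding KK_def using cpt by (simp add: compact_Times)
  have sub: "KK \<subseteq> {0<..} \<times> K" using t by (auto simp: KK_def)
  have cont: "continuous_on KK (\<lambda>(s, y). Wd s y)" by (rule continuous_on_subset[OF Wcont sub])
  have "uniformly_continuous_on KK (\<lambda>(s, y). Wd s y)" by (rule compact_uniformly_continuous[OF cont cKK])
  then obtain d where d: "d > 0" "\<And>p p'. p \<in> KK \<Longrightarrow> p' \<in> KK \<Longrightarrow> dist p' p < d \<Longrightarrow>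
      dist ((\<lambda>(s, y). Wd s y) p') ((\<lambda>(s, y). Wd s y) p) < \<epsilon>"
    unfolding uniformly_continuous_on_def using \<epsilon> by metis
  define \<delta> where "\<delta> = min d (t/2)"
  have \<delta>: "\<delta> > 0" using d t by (simp add: \<delta>_def)
  have main: "\<bar>(W (t + h) y - W t y) / h - Wd t y\<bar> \<le> \<epsilon>" if h: "h \<noteq> 0" "\<bar>h\<bar> < \<delta>" and y: "y \<in> K" for h y
  proof -
    obtain z where z: "\<bar>z - t\<bar> < \<bar>h\<bar>" "(W (t + h) y - W t y) / h = Wd z y"
    proof (cases "h > 0")
      case True
      have "\<And>s. t \<le> s \<Longrightarrow> s \<le> t + h \<Longrightarrow> ((\<lambda>s. W s y) has_real_derivative Wd s y) (at s)"
        using Wder t y by simp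
      from MVT2[of t "t + h", OF _ this] True obtain z where "t < z" "z < t + h" "W (t + h) y - W t y = (t + h - t) * Wd z y"
        by auto
      then show ?thesis using that[of z] True by auto
    next
      case False
      then have hn: "h < 0" using h(1) by simp
      have th: "t + h > 0" using h(2) hn \<delta>_def by (auto simp: \<delta>_def)
      have "\<And>s. t + h \<le> s \<Longrightarrow> s \<le> t \<Longrightarrow> ((\<lambda>s. W s y) has_real_derivative Wd s y) (at s)"
        using Wder th y by simp
      from MVT2[of "t + h" t, OF _ this] hn obtain z where "t + h < z" "z < t" "W t y - W (t + h) y = (t - (t + h)) * Wd z y"
        by auto
      then have "(W (t + h) y - W t y) / h = Wd z y" "\<bar>z - t\<bar> < \<bar>h\<bar>" using hn by (auto simp: field_simps)
      then show ?thesis using that by blast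
    qed
    have zK: "(z, y) \<in> KK" "(t, y) \<in> KK" using z(1) h(2) y t by (auto simp: KK_def \<delta>_def)
    have "dist (z, y) (t, y) < d" using z(1) h(2) by (simp add: dist_Pair_Pair dist_real_def \<delta>_def)
    then have "dist (Wd z y) (Wd t y) < \<epsilon>" using d(2)[OF zK(2) zK(1)] by simp
    then show ?thesis using z(2) by (simp add: dist_real_def)
  qed
  show ?thesis using \<delta> main by blast
qed


theorem lemma6p2:
  fixes \<Omega> :: "'a::euclidean_space set"
    and \<tau> \<beta> A B vstar :: real
    and \<gamma> f :: "real \<Rightarrow> real"
    and u v n S :: "real \<Rightarrow> 'a \<Rightarrow> real"
  assumes dom: "smooth_bounded_domain \<Omega>"
    and tau: "\<tau> > 0" and beta: "\<beta> > 0"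
    and A1: "assumption_A1 \<gamma>"
    and F: "assumption_F f"
    and I_u: "\<forall>x\<in>closure \<Omega>. u 0 x \<ge> 0" and I_u_nz: "\<exists>x\<in>\<Omega>. u 0 x \<noteq> 0"
    and I_n: "\<forall>x\<in>closure \<Omega>. n 0 x \<ge> 0"
    and I_v: "\<forall>x\<in>closure \<Omega>. v 0 x > 0"
    and sol: "classical_solution_P \<Omega> \<tau> \<beta> \<gamma> f u v n"
    and u_nonneg: "\<forall>t\<ge>0. \<forall>x\<in>closure \<Omega>. u t x \<ge> 0"
    and n_nonneg: "\<forall>t\<ge>0. \<forall>x\<in>closure \<Omega>. n t x \<ge> 0"
    and vstar: "vstar > 0" "\<forall>t\<ge>0. \<forall>x\<in>closure \<Omega>. v t x \<ge> vstar"
    and S_def: "\<forall>t\<ge>0. neumann_resolvent \<Omega> \<beta> (\<lambda>x. u t x + n t x) (S t)"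
    and AB: "0 < A" "A \<le> B"
    and comp: "\<forall>t\<ge>0. \<forall>x\<in>closure \<Omega>. A * S t x \<le> v t x \<and> v t x \<le> B * S t x"
  shows "\<exists>C>0. \<forall>t>0. \<forall>x\<in>\<Omega>.
           (\<lambda>s. B * S s x) differentiable (at t) \<and>
           dt (\<lambda>s y. B * S s y) t x
             + B * (min 1 (1 / gamma_star \<gamma> vstar) * \<gamma> (B * S t x)) * (u t x + n t x)
           \<le> \<beta> * B / A * Gamma_fun \<gamma> (B * S t x) + C"
proof -
  have \<Omega>: "open \<Omega>" "bounded \<Omega>" and sb: "\<forall>x\<in>frontier \<Omega>. \<exists>r \<phi>. local_defining_fun \<Omega> x r \<phi>"
    using dom unfolding smooth_bounded_domain_def by auto
  have cpt: "compact (closure \<Omega>)" using \<Omega>(2) by (simp add: compact_closure)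
  have regu: "classical_reg \<Omega> u" and regn: "classical_reg \<Omega> n"
    and Cug: "\<And>t. t > 0 \<Longrightarrow> C2_C1bar \<Omega> (\<lambda>x. u t x * \<gamma> (v t x))"
    and pde: "\<And>t x. t > 0 \<Longrightarrow> x \<in> \<Omega> \<Longrightarrow>
        dt u t x = lap (\<lambda>y. u t y * \<gamma> (v t y)) x + u t x * f (n t x) \<and>
        \<tau> * dt v t x = lap (v t) x - \<beta> * v t x + u t x \<and>
        dt n t x = lap (n t) x - u t x * f (n t x)"
    and nbc: "\<And>t. t > 0 \<Longrightarrow> neumann_bc \<Omega> (\<lambda>x. u t x * \<gamma> (v t x)) \<and> neumann_bc \<Omega> (v t) \<and> neumann_bc \<Omega> (n t)"
    using sol unfolding classical_solution_P_def by auto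
  have nC: "\<And>t. t > 0 \<Longrightarrow> C2_C1bar \<Omega> (n t)" using regn unfolding classical_reg_def by blast
  have ncont: "continuous_on ({0..} \<times> closure \<Omega>) (\<lambda>(t, x). n t x)" using regn unfolding classical_reg_def by blast
  have ddiff: "\<And>w t x. classical_reg \<Omega> w \<Longrightarrow> t > 0 \<Longrightarrow> x \<in> closure \<Omega> \<Longrightarrow>
      ((\<lambda>s. w s x) has_real_derivative dt w t x) (at t)"
    unfolding classical_reg_def dt_def by (simp add: DERIV_deriv_iff_real_differentiable)
  have SC: "C2_C1bar \<Omega> (S s)" if "s \<ge> 0" for s
    using S_def that unfolding neumann_resolvent_def by blast
  have Sreg: "C2i \<Omega> (S s) \<and> continuous_on (closure \<Omega>) (S s) \<and> NB \<Omega> (S s)" if "s \<ge> 0" for s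
    using C2C1_C2i[OF SC[OF that]] C2C1_cont[OF SC[OF that]] NB_of[OF SC[OF that]] S_def that
    unfolding neumann_resolvent_def by blast
  have Seq: "- lap (S s) y + \<beta> * S s y = (\<lambda>s y. u s y + n s y) s y" if "s \<ge> 0" "y \<in> \<Omega>" for s y
    using S_def that unfolding neumann_resolvent_def by auto
  have B: "B > 0" using AB by simp
  have Spos: "S s y \<ge> vstar / B" if "s \<ge> 0" "y \<in> closure \<Omega>" for s y
  proof -
    have "vstar \<le> B * S s y" using vstar(2) comp that by force
    then show ?thesis using B by (simp add: divide_le_eq mult.commute)
  qed
  have n0c: "continuous_on (closure \<Omega>) (\<lambda>x. n 0 x)"
  proof -
    have "continuous_on (closure \<Omega>) (\<lambda>x. (\<lambda>(t, x). n t x) (0::real, x))"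
      by (rule continuous_on_compose2[OF ncont]) (auto intro!: continuous_intros)
    then show ?thesis by simp
  qed
  obtain M0 where M0: "\<And>x. x \<in> closure \<Omega> \<Longrightarrow> n 0 x \<le> M0"
  proof -
    have "compact ((\<lambda>x. n 0 x) ` closure \<Omega>)" by (rule compact_continuous_image[OF n0c cpt])
    then obtain M1 where "\<forall>v\<in>(\<lambda>x. n 0 x) ` closure \<Omega>. norm v \<le> M1"
      using compact_imp_bounded bounded_iff by metis
    then have "\<And>x. x \<in> closure \<Omega> \<Longrightarrow> n 0 x \<le> M1"
      by (metis abs_le_D1 image_eqI real_norm_def)
    then show ?thesis by (rule that)
  qed
  have nb: "n t y \<le> M0" if "t \<ge> 0" "y \<in> closure \<Omega>" for t y
  proof (rule parabolic_mp[OF \<Omega> sb ncont _ _ _ _ M0 that])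
    fix t :: real assume t: "t > 0"
    show "C2i \<Omega> (n t)" by (rule C2C1_C2i[OF nC[OF t]])
    show "NB \<Omega> (n t)" using NB_of[OF nC[OF t]] nbc[OF t] by blast
    fix x assume x: "x \<in> \<Omega>"
    show "((\<lambda>s. n s x) has_real_derivative dt n t x) (at t)"
      by (rule ddiff[OF regn t]) (use x closure_subset in blast)
    have xc: "x \<in> closure \<Omega>" using x closure_subset by blast
    have "u t x \<ge> 0" "n t x \<ge> 0" using u_nonneg n_nonneg t xc by auto
    then have "f (n t x) \<ge> 0" using F unfolding assumption_F_def by blast
    then have "u t x * f (n t x) \<ge> 0" using \<open>u t x \<ge> 0\<close> by simp
    then show "dt n t x \<le> lap (n t) x" using pde[OF t x] by simp
  qed
  define sst where "sst = A * vstar / B"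
  have sst: "sst > 0" using AB vstar(1) by (simp add: sst_def)
  define Hs where "Hs = Gamma_fun \<gamma> sst - sst * \<gamma> sst"
  define Kz where "Kz = \<beta> * M0 - \<beta> * \<beta> / A * Hs"
  define C where "C = max 1 (B * Kz / \<beta>)"
  have gsv: "gamma_star \<gamma> vstar = \<gamma> vstar" by (rule gamma_star_eq[OF A1 vstar(1)])
  have Gcont: "continuous_on {0<..} (Gamma_fun \<gamma>)"
    using Gamma_deriv[OF A1] by (meson DERIV_isCont continuous_at_imp_continuous_on greaterThan_iff)
  show ?thesis
  proof (intro exI[of _ C] conjI allI impI ballI)
    show "C > 0" by (simp add: C_def)
    fix t :: real and x assume t: "t > 0" and x: "x \<in> \<Omega>"
    have t0: "t \<ge> 0" using t by simp
    have xc: "x \<in> closure \<Omega>" using x closure_subset by blast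
    note St = Sreg[OF t0]
    have ASpos: "A * S t y \<ge> sst" if "y \<in> closure \<Omega>" for y
    proof -
      have "A * (vstar / B) \<le> A * S t y" by (rule mult_left_mono[OF Spos[OF t0 that]]) (use AB in simp)
      then show ?thesis by (simp add: sst_def)
    qed
    have ASp: "A * S t y > 0" if "y \<in> closure \<Omega>" for y using ASpos[OF that] sst by simp
    define \<Phi> where "\<Phi> = (\<lambda>y. u t y * \<gamma> (v t y) + n t y)"
    define Y0 where "Y0 = (\<lambda>y. (1 / A) * Gamma_fun \<gamma> (A * S t y))"
    define Z where "Z = (\<lambda>y. \<Phi> y - \<beta> * Y0 y)"
    define V where "V = (\<lambda>y. dt u t y + dt n t y)"
    have Cu: "C2i \<Omega> (\<lambda>y. u t y * \<gamma> (v t y))" by (rule C2C1_C2i[OF Cug[OF t]])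
    have Cn: "C2i \<Omega> (n t)" by (rule C2C1_C2i[OF nC[OF t]])
    have CPhi: "C2i \<Omega> \<Phi>" unfolding \<Phi>_def by (rule C2i_add(1)[OF \<Omega>(1) Cu Cn])
    have lapPhi: "lap \<Phi> y = lap (\<lambda>y. u t y * \<gamma> (v t y)) y + lap (n t) y" if "y \<in> \<Omega>" for y
      unfolding \<Phi>_def by (rule C2i_add(2)[OF \<Omega>(1) Cu Cn that])
    have contPhi: "continuous_on (closure \<Omega>) \<Phi>" unfolding \<Phi>_def
      by (rule continuous_on_add[OF C2C1_cont[OF Cug[OF t]] C2C1_cont[OF nC[OF t]]])
    have NBPhi: "NB \<Omega> \<Phi>" unfolding \<Phi>_def
      using NB_add NB_of[OF Cug[OF t]] NB_of[OF nC[OF t]] nbc[OF t] by blast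
    have CAS: "C2i \<Omega> (\<lambda>y. A * S t y)" by (rule C2i_scale(1)[OF \<Omega>(1)]) (use St in blast)
    have lapAS: "lap (\<lambda>y. A * S t y) y = A * lap (S t) y" if "y \<in> \<Omega>" for y
      by (rule C2i_scale(2)[OF \<Omega>(1) _ that]) (use St in blast)
    have GD: "(Gamma_fun \<gamma> has_real_derivative \<gamma> (A * S t y)) (at (A * S t y))" if "y \<in> closure \<Omega>" for y
      by (rule Gamma_deriv[OF A1 ASp[OF that]])
    have gD: "(\<gamma> has_real_derivative deriv \<gamma> (A * S t y)) (at (A * S t y))" if "y \<in> closure \<Omega>" for y
      by (rule A1_deriv[OF A1 ASp[OF that]])
    have CG: "C2i \<Omega> (\<lambda>y. Gamma_fun \<gamma> (A * S t y))"
      "\<And>y. y \<in> \<Omega> \<Longrightarrow> lap (\<lambda>y. Gamma_fun \<gamma> (A * S t y)) y =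
          deriv \<gamma> (A * S t y) * (\<Sum>i\<in>Basis. (pd i (\<lambda>y. A * S t y) y)\<^sup>2) + \<gamma> (A * S t y) * lap (\<lambda>y. A * S t y) y"
      using comp_C2i[OF \<Omega>(1) CAS, of "Gamma_fun \<gamma>" \<gamma> "deriv \<gamma>"] GD gD closure_subset by blast+
    have CY: "C2i \<Omega> Y0" unfolding Y0_def by (rule C2i_scale(1)[OF \<Omega>(1) CG(1)])
    have lapY: "lap Y0 y = (1 / A) * lap (\<lambda>y. Gamma_fun \<gamma> (A * S t y)) y" if "y \<in> \<Omega>" for y
      unfolding Y0_def by (rule C2i_scale(2)[OF \<Omega>(1) CG(1) that])
    have contAS: "continuous_on (closure \<Omega>) (\<lambda>y. A * S t y)" using St by (intro continuous_intros) auto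
    have contY: "continuous_on (closure \<Omega>) Y0" unfolding Y0_def
    proof (intro continuous_intros)
      show "continuous_on (closure \<Omega>) (\<lambda>y. Gamma_fun \<gamma> (A * S t y))"
        by (rule continuous_on_compose2[OF Gcont contAS]) (use ASp in auto)
    qed
    have NBAS: "NB \<Omega> (\<lambda>y. A * S t y)" by (rule NB_scale) (use St in blast)
    have NBY: "NB \<Omega> Y0" unfolding Y0_def
      by (rule NB_scale[OF NB_comp[OF NBAS]]) (use GD frontier_def in auto)
    have CZ: "C2i \<Omega> Z" unfolding Z_def by (rule C2i_diff(1)[OF \<Omega>(1) CPhi C2i_scale(1)[OF \<Omega>(1) CY]])
    have contZ: "continuous_on (closure \<Omega>) Z" unfolding Z_def
      by (intro continuous_on_diff continuous_on_mult continuous_on_const contPhi contY)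
    have NBZ: "NB \<Omega> Z" unfolding Z_def by (rule NB_diff[OF NBPhi NB_scale[OF NBY]])
    have Zeq: "- lap Z y + \<beta> * Z y + V y \<le> Kz" if y: "y \<in> \<Omega>" for y
    proof -
      have yc: "y \<in> closure \<Omega>" using y closure_subset by blast
      define gs where "gs = \<gamma> (A * S t y)"
      define G where "G = Gamma_fun \<gamma> (A * S t y)"
      define L where "L = lap (S t) y"
      define s where "s = S t y"
      have lapZ: "lap Z y = lap \<Phi> y - \<beta> * lap Y0 y"
        unfolding Z_def using C2i_diff(2)[OF \<Omega>(1) CPhi C2i_scale(1)[OF \<Omega>(1) CY] y] C2i_scale(2)[OF \<Omega>(1) CY y] by simp
      have V: "V y = lap \<Phi> y" using pde[OF t y] lapPhi[OF y] by (simp add: V_def)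
      have E: "- lap Z y + \<beta> * Z y + V y = \<beta> * lap Y0 y + \<beta> * \<Phi> y - \<beta> * \<beta> * Y0 y"
        using lapZ V by (simp add: Z_def algebra_simps)
      have dS: "deriv \<gamma> (A * S t y) * (\<Sum>i\<in>Basis. (pd i (\<lambda>y. A * S t y) y)\<^sup>2) \<le> 0"
        by (rule mult_nonpos_nonneg) (use A1_dneg[OF A1 ASp[OF yc]] in \<open>auto intro: sum_nonneg\<close>)
      have lY: "lap Y0 y \<le> gs * L"
      proof -
        have "lap Y0 y = (1 / A) * (deriv \<gamma> (A * S t y) * (\<Sum>i\<in>Basis. (pd i (\<lambda>y. A * S t y) y)\<^sup>2) + gs * (A * L))"
          using lapY[OF y] CG(2)[OF y] lapAS[OF y] by (simp add: gs_def L_def)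
        also have "\<dots> \<le> (1 / A) * (gs * (A * L))"
          by (rule mult_left_mono) (use dS AB in auto)
        also have "\<dots> = gs * L" using AB by simp
        finally show ?thesis .
      qed
      have Ls: "L = \<beta> * s - (u t y + n t y)" using Seq[OF t0 y] by (simp add: L_def s_def)
      have "- lap Z y + \<beta> * Z y + V y \<le> \<beta> * (gs * L) + \<beta> * \<Phi> y - \<beta> * \<beta> * Y0 y"
        using E mult_left_mono[OF lY, of \<beta>] beta by simp
      also have "\<dots> = \<beta> * (u t y * (\<gamma> (v t y) - gs)) + \<beta> * (n t y * (1 - gs)) + \<beta> * \<beta> * (s * gs - G / A)"
        unfolding Ls \<Phi>_def Y0_def G_def by (simp add: algebra_simps)
      also have "\<dots> \<le> 0 + \<beta> * M0 + \<beta> * \<beta> * (- (Hs / A))"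
      proof (intro add_mono)
        have "\<gamma> (v t y) \<le> gs"
          unfolding gs_def by (rule A1_mono[OF A1 ASp[OF yc]]) (use comp t0 yc in blast)
        then have "u t y * (\<gamma> (v t y) - gs) \<le> 0"
          using u_nonneg t0 yc by (simp add: mult_nonneg_nonpos)
        then show "\<beta> * (u t y * (\<gamma> (v t y) - gs)) \<le> 0" using beta by (simp add: mult_nonneg_nonpos)
        have "gs > 0" unfolding gs_def by (rule A1_pos[OF A1 ASp[OF yc]])
        then have "n t y * (1 - gs) \<le> n t y" using n_nonneg t0 yc by (simp add: algebra_simps)
        also have "\<dots> \<le> M0" by (rule nb[OF t0 yc])
        finally show "\<beta> * (n t y * (1 - gs)) \<le> \<beta> * M0" using beta by simp
        have "Hs \<le> G - (A * s) * gs"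
          unfolding Hs_def G_def gs_def s_def by (rule H_mono[OF A1 sst ASpos[OF yc]])
        then have "Hs / A \<le> (G - (A * s) * gs) / A" by (rule divide_right_mono) (use AB in simp)
        moreover have "s * gs - G / A = - ((G - (A * s) * gs) / A)" using AB by (simp add: field_simps)
        ultimately have "s * gs - G / A \<le> - (Hs / A)" by simp
        then show "\<beta> * \<beta> * (s * gs - G / A) \<le> \<beta> * \<beta> * (- (Hs / A))"
          by (rule mult_left_mono) (use beta in simp)
      qed
      also have "\<dots> = Kz" by (simp add: Kz_def)
      finally show ?thesis .
    qed
    have Uconv: "\<exists>\<delta>>0. \<forall>h. h \<noteq> 0 \<longrightarrow> \<bar>h\<bar> < \<delta> \<longrightarrow>
        (\<forall>y\<in>\<Omega>. \<bar>((\<lambda>s y. u s y + n s y) (t + h) y - (\<lambda>s y. u s y + n s y) t y) / h - V y\<bar> \<le> \<epsilon>)"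
      if \<epsilon>: "\<epsilon> > 0" for \<epsilon>
    proof -
      have Wder: "((\<lambda>s. u s y + n s y) has_real_derivative (dt u s y + dt n s y)) (at s)"
        if "s > 0" "y \<in> closure \<Omega>" for s y
        by (rule DERIV_add[OF ddiff[OF regu that] ddiff[OF regn that]])
      have cu: "continuous_on ({0<..} \<times> closure \<Omega>) (\<lambda>(s, y). dt u s y)" using regu unfolding classical_reg_def by blast
      have cn: "continuous_on ({0<..} \<times> closure \<Omega>) (\<lambda>(s, y). dt n s y)" using regn unfolding classical_reg_def by blast
      have c2: "continuous_on ({0<..} \<times> closure \<Omega>) (\<lambda>p. (\<lambda>(s, y). dt u s y) p + (\<lambda>(s, y). dt n s y) p)"
        by (rule continuous_on_add[OF cu cn])
      have eq: "(\<lambda>p. (\<lambda>(s, y). dt u s y) p + (\<lambda>(s, y). dt n s y) p) = (\<lambda>(s, y). dt u s y + dt n s y)"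
        by (auto simp: fun_eq_iff)
      have Wc: "continuous_on ({0<..} \<times> closure \<Omega>) (\<lambda>(s, y). dt u s y + dt n s y)"
        using c2 unfolding eq .
      from time_quot_unif[OF cpt t, of "\<lambda>s y. u s y + n s y" "\<lambda>s y. dt u s y + dt n s y", OF Wder Wc \<epsilon>]
      obtain \<delta> where \<delta>: "\<delta> > 0" "\<forall>h. h \<noteq> 0 \<longrightarrow> \<bar>h\<bar> < \<delta> \<longrightarrow> (\<forall>y\<in>closure \<Omega>. \<bar>(u (t + h) y + n (t + h) y - (u t y + n t y)) / h - (dt u t y + dt n t y)\<bar> \<le> \<epsilon>)"
        by auto
      show ?thesis
      proof (intro exI[of _ \<delta>] conjI allI impI ballI)
        show "\<delta> > 0" by (rule \<delta>(1))
        fix h y assume h: "h \<noteq> 0" "\<bar>h\<bar> < \<delta>" and y: "y \<in> \<Omega>"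
        have "y \<in> closure \<Omega>" using y closure_subset by blast
        then show "\<bar>((\<lambda>s y. u s y + n s y) (t + h) y - (\<lambda>s y. u s y + n s y) t y) / h - V y\<bar> \<le> \<epsilon>"
          using \<delta>(2) h by (simp add: V_def)
      qed
    qed
    obtain D where D: "((\<lambda>s. S s x) has_real_derivative D) (at t)" "D + Z x \<le> Kz / \<beta>"
      using quotient_limit[OF \<Omega> sb beta t Sreg Seq Uconv CZ contZ NBZ Zeq x] by blast
    have DB: "((\<lambda>s. B * S s x) has_real_derivative B * D) (at t)" by (rule DERIV_cmult[OF D(1)])
    show "(\<lambda>s. B * S s x) differentiable (at t)"
      using DB real_differentiable_def by blast
    have dtB: "dt (\<lambda>s y. B * S s y) t x = B * D" unfolding dt_def by (rule DERIV_imp_deriv[OF DB])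
    define gB where "gB = \<gamma> (B * S t x)"
    define m where "m = min 1 (1 / gamma_star \<gamma> vstar)"
    have vpos: "v t x \<ge> vstar" using vstar(2) t0 xc by blast
    have BS: "v t x \<le> B * S t x" "A * S t x \<le> v t x" using comp t0 xc by auto
    have gv: "gB \<le> \<gamma> (v t x)" unfolding gB_def by (rule A1_mono[OF A1 _ BS(1)]) (use vpos vstar(1) in simp)
    have gvs: "\<gamma> (v t x) \<le> \<gamma> vstar" by (rule A1_mono[OF A1 vstar(1) vpos])
    have gBp: "gB > 0" unfolding gB_def by (rule A1_pos[OF A1]) (use vpos vstar(1) BS in simp)
    have gsp: "\<gamma> vstar > 0" by (rule A1_pos[OF A1 vstar(1)])
    have m: "0 < m" "m \<le> 1" "m \<le> 1 / \<gamma> vstar" using gsp by (auto simp: m_def gsv)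
    have "m * gB \<le> 1 * gB" by (rule mult_right_mono[OF m(2)]) (use gBp in simp)
    then have mg1: "m * gB \<le> \<gamma> (v t x)" using gv by simp
    have mg2: "m * gB \<le> 1"
    proof -
      have "m * gB \<le> (1 / \<gamma> vstar) * gB" by (rule mult_right_mono[OF m(3)]) (use gBp in simp)
      also have "\<dots> \<le> (1 / \<gamma> vstar) * \<gamma> vstar" by (rule mult_left_mono) (use gv gvs gsp in auto)
      also have "\<dots> = 1" using gsp by simp
      finally show ?thesis .
    qed
    have uu: "u t x \<ge> 0" "n t x \<ge> 0" using u_nonneg n_nonneg t0 xc by auto
    have part1: "B * (m * gB * (u t x + n t x)) \<le> B * (u t x * \<gamma> (v t x) + n t x)"
    proof -
      have "m * gB * u t x \<le> \<gamma> (v t x) * u t x" by (rule mult_right_mono[OF mg1 uu(1)])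
      moreover have "m * gB * n t x \<le> 1 * n t x" by (rule mult_right_mono[OF mg2 uu(2)])
      ultimately have "m * gB * (u t x + n t x) \<le> u t x * \<gamma> (v t x) + n t x" by (simp add: algebra_simps)
      then show ?thesis using B by simp
    qed
    have Gm: "Gamma_fun \<gamma> (A * S t x) \<le> Gamma_fun \<gamma> (B * S t x)"
    proof (rule Gamma_mono[OF A1 ASp[OF xc]])
      have "0 < S t x" using ASp[OF xc] AB by (simp add: zero_less_mult_iff)
      then show "A * S t x \<le> B * S t x" by (intro mult_right_mono AB(2)) simp
    qed
    have part2: "B * D \<le> B * Kz / \<beta> - B * (u t x * \<gamma> (v t x) + n t x) + \<beta> * B / A * Gamma_fun \<gamma> (A * S t x)"
    proof -
      have "D \<le> Kz / \<beta> - Z x" using D(2) by simp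
      then have "B * D \<le> B * (Kz / \<beta> - Z x)" using B by simp
      also have "\<dots> = B * Kz / \<beta> - B * (u t x * \<gamma> (v t x) + n t x) + \<beta> * B / A * Gamma_fun \<gamma> (A * S t x)"
        by (simp add: Z_def \<Phi>_def Y0_def algebra_simps)
      finally show ?thesis .
    qed
    have part3: "\<beta> * B / A * Gamma_fun \<gamma> (A * S t x) \<le> \<beta> * B / A * Gamma_fun \<gamma> (B * S t x)"
      by (rule mult_left_mono[OF Gm]) (use beta AB in simp)
    have "B * Kz / \<beta> \<le> C" by (simp add: C_def)
    then show "dt (\<lambda>s y. B * S s y) t x + B * (min 1 (1 / gamma_star \<gamma> vstar) * \<gamma> (B * S t x)) * (u t x + n t x)
        \<le> \<beta> * B / A * Gamma_fun \<gamma> (B * S t x) + C"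
      using part1 part2 part3 unfolding dtB m_def[symmetric] gB_def[symmetric] by (simp add: algebra_simps)
  qed
qed


end
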